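(* For every $n\in\mathbb N$, the relation $\to_n$ (reduction at depth $n$), restricted to terms of $\ell\Lambda_\infty^{4S}$, is strongly normalising: there is no infinite sequence $M_0\to_n M_1\to_n M_2\to_n\cdots$ with $M_0$ a term of $\ell\Lambda_\infty^{4S}$.
   Context: Preterms: possibly infinite trees generated by $M ::= x \mid MN \mid \lambda x.M \mid \lambda^{\downarrow}x.M \mid \lambda^{\uparrow}x.M \mid \downarrow M \mid \uparrow M$ ($\downarrow M$ inductive box, $\uparrow M$ coinductive box); substitution is capture-avoiding. Patterns: $x,\downarrow x,\uparrow x,\#x,\dagger x$; environments: finite sets of patterns, each variable in at most one; $\Theta,\Xi,\Psi,\Phi$ linear environments (sets of variables) with marked versions $\#\Theta$ etc.; $\Upsilon,\Pi$ environments with only patterns $y$, $\downarrow y$; commas are disjoint unions. A term of $\ell\Lambda_\infty^{4S}$ is a preterm $M$ with $\Gamma\vdash M$ derivable for some $\Gamma$ by: (vl) $\#\Theta,\uparrow\Xi,\dagger\Psi,x\vdash x$; (vd) $\#\Theta,\uparrow\Xi,\dagger\Psi,\#x\vdash x$; (va) $\#\Theta,\uparrow\Xi,\dagger\Psi,\dagger x\vdash x$; (a) from $\Upsilon,\#\Theta,\uparrow\Xi,\dagger\Psi\vdash M$ and $\Pi,\#\Theta,\uparrow\Xi,\dagger\Psi\vdash N$ infer $\Upsilon,\Pi,\#\Theta,\uparrow\Xi,\dagger\Psi\vdash MN$; (ll) $\Gamma,x\vdash M$ gives $\Gamma\vdash\lambda x.M$; (li)$_1$ $\Gamma,\#x\vdash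 M$ gives $\Gamma\vdash\lambda^\downarrow x.M$; (li)$_2$ $\Gamma,\downarrow x\vdash M$ gives $\Gamma\vdash\lambda^\downarrow x.M$; (lc) $\Gamma,\uparrow x\vdash M$ gives $\Gamma\vdash\lambda^\uparrow x.M$; (mi) from $\Xi,\uparrow\Psi,\dagger\Phi\vdash M$ infer $\#\Theta,\downarrow\Xi,\uparrow\Psi,\dagger\Phi\vdash\downarrow M$; (mc) from $\dagger\Xi,\dagger\Psi\vdash M$ infer $\#\Theta,\uparrow\Xi,\dagger\Psi\vdash\uparrow M$; (mc) coinductive, others inductive (every infinite branch of a derivation contains infinitely many (mc)). Basic reduction: $(\lambda x.M)N\mapsto M[N/x]$, $(\lambda^\downarrow x.M)(\downarrow N)\mapsto M[N/x]$, $(\lambda^\uparrow x.M)(\uparrow N)\mapsto M[N/x]$; $M\to_n N$ iff $M=C[L]$, $N=C[P]$, $L\mapsto P$, where $C$ is a one-hole context whose hole lies inside exactly $n$ coinductive boxes $\uparrow(\cdot)$ (and any number of inductive boxes). *)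

theory Defs
  imports Main
begin

text \<open>Var i: variable (de Bruijn index); App; Lam (linear abstraction);
  LamI (inductive abstraction \<lambda>\<down>); LamC (coinductive abstraction \<lambda>\<up>);
  BoxI (inductive box \<down>M); BoxC (coinductive box \<up>M).\<close>

codatatype trm =
    Var nat
  | App trm trm
  | Lam trm
  | LamI trm
  | LamC trm
  | BoxI trm
  | BoxC trm

primcorec lift :: "nat \<Rightarrow> trm \<Rightarrow> trm" where
  "lift k M = (case M of
      Var i \<Rightarrow> Var (if i < k then i else Suc i)
    | App a b \<Rightarrow> App (lift k a) (lift k b)
    | Lam a \<Rightarrow> Lam (lift (Suc k) a)
    | LamI a \<Rightarrow> LamI (lift (Suc k) a)
    | LamC a \<Rightarrow> LamC (lift (Suc k) a)
    | BoxI a \<Rightarrow> BoxI (lift k a)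
    | BoxC a \<Rightarrow> BoxC (lift k a))"

text \<open>Capture-avoiding substitution: substs k P M replaces index k in M by P
  (P already shifted under the k enclosing binders) and decrements indices > k.\<close>
primcorec substs :: "nat \<Rightarrow> trm \<Rightarrow> trm \<Rightarrow> trm" where
  "substs k P M = (case M of
      Var i \<Rightarrow> (if i < k then Var i else if i = k then
                 (case P of
                    Var j \<Rightarrow> Var j
                  | App a b \<Rightarrow> App a b
                  | Lam a \<Rightarrow> Lam a
                  | LamI a \<Rightarrow> LamI a
                  | LamC a \<Rightarrow> LamC a
                  | BoxI a \<Rightarrow> BoxI a
                  | BoxC a \<Rightarrow> BoxC a)
               else Var (i - 1))
    | App a b \<Rightarrow> App (substs k P a) (substs k P b)
    | Lam a \<Rightarrow> Lam (substs (Suc k) (lift 0 P) a)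
    | LamI a \<Rightarrow> LamI (substs (Suc k) (lift 0 P) a)
    | LamC a \<Rightarrow> LamC (substs (Suc k) (lift 0 P) a)
    | BoxI a \<Rightarrow> BoxI (substs k P a)
    | BoxC a \<Rightarrow> BoxC (substs k P a))"

text \<open>M[N/x] where x is the variable bound by the outermost removed binder.\<close>
definition subst0 :: "trm \<Rightarrow> trm \<Rightarrow> trm" where
  "subst0 M N = substs 0 N M"

text \<open>red n M N: M = C[L], N = C[P], L \<mapsto> P, with the hole of C under exactly
  n coinductive boxes.\<close>
inductive red :: "nat \<Rightarrow> trm \<Rightarrow> trm \<Rightarrow> bool" where
  beta_lin: "red 0 (App (Lam M) N) (subst0 M N)"
| beta_ind: "red 0 (App (LamI M) (BoxI N)) (subst0 M N)"
| beta_coind: "red 0 (App (LamC M) (BoxC N)) (subst0 M N)"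
| app_l: "red n M M' \<Longrightarrow> red n (App M N) (App M' N)"
| app_r: "red n N N' \<Longrightarrow> red n (App M N) (App M N')"
| lam: "red n M M' \<Longrightarrow> red n (Lam M) (Lam M')"
| lamI: "red n M M' \<Longrightarrow> red n (LamI M) (LamI M')"
| lamC: "red n M M' \<Longrightarrow> red n (LamC M) (LamC M')"
| boxI: "red n M M' \<Longrightarrow> red n (BoxI M) (BoxI M')"
| boxC: "red n M M' \<Longrightarrow> red (Suc n) (BoxC M) (BoxC M')"

text \<open>Patterns: PLin = x, PInd = \<down>x, PCo = \<up>x, PSharp = #x, PDag = \<dagger>x.
  An environment maps each variable to at most one pattern.\<close>
datatype pat = PLin | PInd | PCo | PSharp | PDag

type_synonym env = "nat \<Rightarrow> pat option"

definition shared_only :: "env \<Rightarrow> bool" where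
  "shared_only \<Gamma> \<longleftrightarrow> (\<forall>i p. \<Gamma> i = Some p \<longrightarrow> p \<in> {PSharp, PCo, PDag})"

definition ext :: "pat \<Rightarrow> env \<Rightarrow> env" where
  "ext p \<Gamma> = (\<lambda>i. if i = 0 then Some p else \<Gamma> (i - 1))"

text \<open>\<Gamma> = \<Upsilon>,\<Pi>,#\<Theta>,\<up>\<Xi>,\<dagger>\<Psi> with \<Gamma>1 = \<Upsilon>,#\<Theta>,\<up>\<Xi>,\<dagger>\<Psi> and \<Gamma>2 = \<Pi>,#\<Theta>,\<up>\<Xi>,\<dagger>\<Psi>.\<close>
definition app_split :: "env \<Rightarrow> env \<Rightarrow> env \<Rightarrow> bool" where
  "app_split \<Gamma> \<Gamma>1 \<Gamma>2 \<longleftrightarrow> (\<forall>i.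
     (\<Gamma> i = None \<longrightarrow> \<Gamma>1 i = None \<and> \<Gamma>2 i = None) \<and>
     (\<forall>p \<in> {PSharp, PCo, PDag}. \<Gamma> i = Some p \<longrightarrow> \<Gamma>1 i = Some p \<and> \<Gamma>2 i = Some p) \<and>
     (\<forall>p \<in> {PLin, PInd}. \<Gamma> i = Some p \<longrightarrow>
         (\<Gamma>1 i = Some p \<and> \<Gamma>2 i = None) \<or> (\<Gamma>1 i = None \<and> \<Gamma>2 i = Some p)))"

text \<open>Rule (mi): conclusion #\<Theta>,\<down>\<Xi>,\<up>\<Psi>,\<dagger>\<Phi>, premise \<Xi>,\<up>\<Psi>,\<dagger>\<Phi>.\<close>
definition mi_env :: "env \<Rightarrow> env \<Rightarrow> bool" where
  "mi_env \<Gamma> \<Delta> \<longleftrightarrow> (\<forall>i.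
     (\<Gamma> i = None \<longrightarrow> \<Delta> i = None) \<and>
     (\<Gamma> i = Some PLin \<longrightarrow> False) \<and>
     (\<Gamma> i = Some PSharp \<longrightarrow> \<Delta> i = None) \<and>
     (\<Gamma> i = Some PInd \<longrightarrow> \<Delta> i = Some PLin) \<and>
     (\<Gamma> i = Some PCo \<longrightarrow> \<Delta> i = Some PCo) \<and>
     (\<Gamma> i = Some PDag \<longrightarrow> \<Delta> i = Some PDag))"

text \<open>Rule (mc): conclusion #\<Theta>,\<up>\<Xi>,\<dagger>\<Psi>, premise \<dagger>\<Xi>,\<dagger>\<Psi>.\<close>
definition mc_env :: "env \<Rightarrow> env \<Rightarrow> bool" where
  "mc_env \<Gamma> \<Delta> \<longleftrightarrow> shared_only \<Gamma> \<and> (\<forall>i.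
     (\<Gamma> i = None \<longrightarrow> \<Delta> i = None) \<and>
     (\<Gamma> i = Some PSharp \<longrightarrow> \<Delta> i = None) \<and>
     (\<Gamma> i = Some PCo \<longrightarrow> \<Delta> i = Some PDag) \<and>
     (\<Gamma> i = Some PDag \<longrightarrow> \<Delta> i = Some PDag))"

text \<open>Inductive layer; the premise of (mc) refers to the coinductive predicate R.\<close>
inductive typ_ind :: "(env \<Rightarrow> trm \<Rightarrow> bool) \<Rightarrow> env \<Rightarrow> trm \<Rightarrow> bool" for R where
  vl: "\<Gamma> x = Some PLin \<Longrightarrow> shared_only (\<Gamma>(x := None)) \<Longrightarrow> typ_ind R \<Gamma> (Var x)"
| vd: "\<Gamma> x = Some PSharp \<Longrightarrow> shared_only (\<Gamma>(x := None)) \<Longrightarrow> typ_ind R \<Gamma> (Var x)"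
| va: "\<Gamma> x = Some PDag \<Longrightarrow> shared_only (\<Gamma>(x := None)) \<Longrightarrow> typ_ind R \<Gamma> (Var x)"
| a: "app_split \<Gamma> \<Gamma>1 \<Gamma>2 \<Longrightarrow> typ_ind R \<Gamma>1 M \<Longrightarrow> typ_ind R \<Gamma>2 N \<Longrightarrow> typ_ind R \<Gamma> (App M N)"
| ll: "typ_ind R (ext PLin \<Gamma>) M \<Longrightarrow> typ_ind R \<Gamma> (Lam M)"
| li1: "typ_ind R (ext PSharp \<Gamma>) M \<Longrightarrow> typ_ind R \<Gamma> (LamI M)"
| li2: "typ_ind R (ext PInd \<Gamma>) M \<Longrightarrow> typ_ind R \<Gamma> (LamI M)"
| lc: "typ_ind R (ext PCo \<Gamma>) M \<Longrightarrow> typ_ind R \<Gamma> (LamC M)"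
| mi: "mi_env \<Gamma> \<Delta> \<Longrightarrow> typ_ind R \<Delta> M \<Longrightarrow> typ_ind R \<Gamma> (BoxI M)"
| mc: "mc_env \<Gamma> \<Delta> \<Longrightarrow> R \<Delta> M \<Longrightarrow> typ_ind R \<Gamma> (BoxC M)"

lemma typ_ind_mono[mono]:
  assumes RS: "R \<le> S" shows "typ_ind R \<le> typ_ind S"
proof (intro le_funI le_boolI)
  fix \<Gamma> M assume "typ_ind R \<Gamma> M"
  then show "typ_ind S \<Gamma> M"
    by (induction rule: typ_ind.induct) (use RS in \<open>auto intro: typ_ind.intros\<close>)
qed

text \<open>Mixed inductive/coinductive derivability \<nu>X.\<mu>Y: every infinite branch
  contains infinitely many (mc).\<close>
coinductive typable :: "env \<Rightarrow> trm \<Rightarrow> bool" where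
  "typ_ind typable \<Gamma> M \<Longrightarrow> typable \<Gamma> M"

definition is_term :: "trm \<Rightarrow> bool" where
  "is_term M \<longleftrightarrow> (\<exists>\<Gamma>. finite (dom \<Gamma>) \<and> typable \<Gamma> M)"

end

theory Submission
  imports Defs "HOL-Library.Multiset"
begin


lemma lift_simps[simp]:
  "lift k (Var i) = Var (if i < k then i else Suc i)"
  "lift k (App a b) = App (lift k a) (lift k b)"
  "lift k (Lam a) = Lam (lift (Suc k) a)"
  "lift k (LamI a) = LamI (lift (Suc k) a)"
  "lift k (LamC a) = LamC (lift (Suc k) a)"
  "lift k (BoxI a) = BoxI (lift k a)"
  "lift k (BoxC a) = BoxC (lift k a)"
  by (subst lift.code; simp)+

lemma substs_simps[simp]:
  "substs k P (App a b) = App (substs k P a) (substs k P b)"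
  "substs k P (Lam a) = Lam (substs (Suc k) (lift 0 P) a)"
  "substs k P (LamI a) = LamI (substs (Suc k) (lift 0 P) a)"
  "substs k P (LamC a) = LamC (substs (Suc k) (lift 0 P) a)"
  "substs k P (BoxI a) = BoxI (substs k P a)"
  "substs k P (BoxC a) = BoxC (substs k P a)"
  by (subst substs.code; simp)+

lemma substs_var:
  "substs k P (Var i) = (if i < k then Var i else if i = k then P else Var (i - 1))"
  by (subst substs.code; cases P; simp)

definition shp :: "pat \<Rightarrow> bool" where "shp p \<longleftrightarrow> p \<in> {PSharp, PCo, PDag}"

lemma shared_only_alt: "shared_only \<Gamma> \<longleftrightarrow> (\<forall>i p. \<Gamma> i = Some p \<longrightarrow> shp p)"
  by (simp add: shared_only_def shp_def)

definition miimg :: "env \<Rightarrow> env" where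
  "miimg \<Gamma> = (\<lambda>i. case \<Gamma> i of Some PInd \<Rightarrow> Some PLin | Some PSharp \<Rightarrow> None | x \<Rightarrow> x)"
definition mcimg :: "env \<Rightarrow> env" where
  "mcimg \<Gamma> = (\<lambda>i. case \<Gamma> i of Some PCo \<Rightarrow> Some PDag | Some PSharp \<Rightarrow> None | x \<Rightarrow> x)"

lemma opt_pat_cases: "x = None \<or> x = Some PLin \<or> x = Some PInd \<or> x = Some PSharp \<or> x = Some PCo \<or> x = Some PDag"
  by (metis not_None_eq pat.exhaust)

lemma pat_cases_all: "(\<forall>p. P p) \<longleftrightarrow> P PLin \<and> P PInd \<and> P PCo \<and> P PSharp \<and> P PDag"
  by (metis pat.exhaust)

lemma mi_env_iff: "mi_env \<Gamma> \<Delta> \<longleftrightarrow> (\<forall>i. \<Gamma> i \<noteq> Some PLin) \<and> \<Delta> = miimg \<Gamma>"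
proof -
  have "\<And>i. ((\<Gamma> i = None \<longrightarrow> \<Delta> i = None) \<and>
     (\<Gamma> i = Some PLin \<longrightarrow> False) \<and>
     (\<Gamma> i = Some PSharp \<longrightarrow> \<Delta> i = None) \<and>
     (\<Gamma> i = Some PInd \<longrightarrow> \<Delta> i = Some PLin) \<and>
     (\<Gamma> i = Some PCo \<longrightarrow> \<Delta> i = Some PCo) \<and>
     (\<Gamma> i = Some PDag \<longrightarrow> \<Delta> i = Some PDag)) \<longleftrightarrow> \<Gamma> i \<noteq> Some PLin \<and> \<Delta> i = miimg \<Gamma> i"
  proof -
    fix i 
    have "\<Gamma> i = None \<or> \<Gamma> i = Some PLin \<or> \<Gamma> i = Some PInd \<or> \<Gamma> i = Some PSharp \<or> \<Gamma> i = Some PCo \<or> \<Gamma> i = Some PDag"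
      by (metis not_None_eq pat.exhaust)
    then show "?thesis i" unfolding miimg_def by (elim disjE; simp)
  qed
  then show ?thesis unfolding mi_env_def fun_eq_iff by blast
qed

lemma mc_env_iff: "mc_env \<Gamma> \<Delta> \<longleftrightarrow> shared_only \<Gamma> \<and> \<Delta> = mcimg \<Gamma>"
proof -
  have "\<And>i. shared_only \<Gamma> \<Longrightarrow> ((\<Gamma> i = None \<longrightarrow> \<Delta> i = None) \<and>
     (\<Gamma> i = Some PSharp \<longrightarrow> \<Delta> i = None) \<and>
     (\<Gamma> i = Some PCo \<longrightarrow> \<Delta> i = Some PDag) \<and>
     (\<Gamma> i = Some PDag \<longrightarrow> \<Delta> i = Some PDag)) \<longleftrightarrow> \<Delta> i = mcimg \<Gamma> i"
  proof -
    fix i assume "shared_only \<Gamma>"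
    then have "\<Gamma> i = None \<or> \<Gamma> i = Some PSharp \<or> \<Gamma> i = Some PCo \<or> \<Gamma> i = Some PDag"
      unfolding shared_only_def by (cases "\<Gamma> i") auto
    then show "?thesis i" unfolding mcimg_def by (elim disjE; simp)
  qed
  then show ?thesis unfolding mc_env_def fun_eq_iff by blast
qed

lemma typable_iff: "typable \<Gamma> M \<longleftrightarrow> typ_ind typable \<Gamma> M"
  by (auto elim: typable.cases intro: typable.intros)



definition del :: "nat \<Rightarrow> env \<Rightarrow> env" where
  "del k \<Gamma> = (\<lambda>i. if i < k then \<Gamma> i else \<Gamma> (Suc i))"
definition shiftE :: "nat \<Rightarrow> env \<Rightarrow> env" where
  "shiftE k \<Gamma> = (\<lambda>i. if i < k then \<Gamma> i else if i = k then None else \<Gamma> (i - 1))"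
definition merge :: "env \<Rightarrow> env \<Rightarrow> env" where
  "merge A B = (\<lambda>i. case A i of None \<Rightarrow> B i | Some p \<Rightarrow> Some p)"
definition compat :: "env \<Rightarrow> env \<Rightarrow> bool" where
  "compat A B \<longleftrightarrow> (\<forall>i p q. A i = Some p \<longrightarrow> B i = Some q \<longrightarrow> p = q \<and> shp p)"
definition shpart :: "env \<Rightarrow> env" where
  "shpart B = (\<lambda>i. case B i of Some p \<Rightarrow> if shp p then Some p else None | None \<Rightarrow> None)"
definition weak :: "env \<Rightarrow> env \<Rightarrow> bool" where
  "weak \<Gamma> \<Gamma>' \<longleftrightarrow> (\<forall>i. \<Gamma>' i = \<Gamma> i \<or> (\<Gamma> i = None \<and> (\<exists>p. \<Gamma>' i = Some p \<and> shp p))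
       \<or> (\<Gamma> i = Some PLin \<and> \<Gamma>' i = Some PSharp))"

lemma shp_simps[simp]: "shp PSharp" "shp PCo" "shp PDag" "\<not> shp PLin" "\<not> shp PInd"
  by (auto simp: shp_def)

lemma ext_apply: "ext p \<Gamma> i = (if i = 0 then Some p else \<Gamma> (i - 1))"
  by (simp add: ext_def)

lemma app_split_alt: "app_split \<Gamma> \<Gamma>1 \<Gamma>2 \<longleftrightarrow> (\<forall>i.
     (\<Gamma> i = None \<longrightarrow> \<Gamma>1 i = None \<and> \<Gamma>2 i = None) \<and>
     (\<forall>p. \<Gamma> i = Some p \<longrightarrow> shp p \<longrightarrow> \<Gamma>1 i = Some p \<and> \<Gamma>2 i = Some p) \<and>
     (\<forall>p. \<Gamma> i = Some p \<longrightarrow> \<not> shp p \<longrightarrow>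
         (\<Gamma>1 i = Some p \<and> \<Gamma>2 i = None) \<or> (\<Gamma>1 i = None \<and> \<Gamma>2 i = Some p)))"
  unfolding app_split_def shp_def
  apply (rule iff_allI)
  subgoal for i using opt_pat_cases[of "\<Gamma> i"] by (elim disjE; simp)
  done

lemma miimg_apply: "miimg \<Gamma> i = (case \<Gamma> i of Some PInd \<Rightarrow> Some PLin | Some PSharp \<Rightarrow> None | x \<Rightarrow> x)"
  by (simp add: miimg_def)
lemma mcimg_apply: "mcimg \<Gamma> i = (case \<Gamma> i of Some PCo \<Rightarrow> Some PDag | Some PSharp \<Rightarrow> None | x \<Rightarrow> x)"
  by (simp add: mcimg_def)

lemma shiftE_ext: "ext p (shiftE k \<Gamma>) = shiftE (Suc k) (ext p \<Gamma>)"
  by (auto simp: fun_eq_iff ext_apply shiftE_def)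

lemma shiftE_upd: "(shiftE k \<Gamma>)((if x < k then x else Suc x) := None) = shiftE k (\<Gamma>(x := None))"
  by (auto simp: fun_eq_iff shiftE_def)

lemma shiftE_var: "shiftE k \<Gamma> (if x < k then x else Suc x) = \<Gamma> x"
  by (auto simp: shiftE_def)

lemma shared_only_shiftE: "shared_only \<Gamma> \<Longrightarrow> shared_only (shiftE k \<Gamma>)"
  by (auto simp: shared_only_def shiftE_def)

lemma app_split_shiftE: "app_split \<Gamma> \<Gamma>1 \<Gamma>2 \<Longrightarrow> app_split (shiftE k \<Gamma>) (shiftE k \<Gamma>1) (shiftE k \<Gamma>2)"
  unfolding app_split_def shiftE_def by auto

lemma miimg_shiftE: "miimg (shiftE k \<Gamma>) = shiftE k (miimg \<Gamma>)"
  by (auto simp: fun_eq_iff miimg_def shiftE_def)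
lemma mcimg_shiftE: "mcimg (shiftE k \<Gamma>) = shiftE k (mcimg \<Gamma>)"
  by (auto simp: fun_eq_iff mcimg_def shiftE_def)

lemma mi_env_shiftE: "mi_env \<Gamma> \<Delta> \<Longrightarrow> mi_env (shiftE k \<Gamma>) (shiftE k \<Delta>)"
  unfolding mi_env_iff by (auto simp: miimg_shiftE) (auto simp: shiftE_def split: if_splits)
lemma mc_env_shiftE: "mc_env \<Gamma> \<Delta> \<Longrightarrow> mc_env (shiftE k \<Gamma>) (shiftE k \<Delta>)"
  unfolding mc_env_iff by (auto simp: mcimg_shiftE shared_only_shiftE)

definition Xlift :: "env \<Rightarrow> trm \<Rightarrow> bool" where
  "Xlift \<Gamma>' M' \<longleftrightarrow> (\<exists>\<Gamma> M k. typable \<Gamma> M \<and> \<Gamma>' = shiftE k \<Gamma> \<and> M' = lift k M)"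

lemma lift_ind: "typ_ind typable \<Gamma> M \<Longrightarrow>
   typ_ind (\<lambda>\<Gamma> M. Xlift \<Gamma> M \<or> typable \<Gamma> M) (shiftE k \<Gamma>) (lift k M)"
proof (induction arbitrary: k rule: typ_ind.induct)
  case (vl \<Gamma> x) then show ?case 
    by (metis lift_simps(1) shared_only_shiftE shiftE_upd shiftE_var typ_ind.vl)
next
  case (vd \<Gamma> x) then show ?case 
    by (metis lift_simps(1) shared_only_shiftE shiftE_upd shiftE_var typ_ind.vd)
next
  case (va \<Gamma> x) then show ?case 
    by (metis lift_simps(1) shared_only_shiftE shiftE_upd shiftE_var typ_ind.va)
next
  case (a \<Gamma> \<Gamma>1 \<Gamma>2 M N) then show ?case by (auto intro: typ_ind.a app_split_shiftE)
next
  case (ll \<Gamma> M) then show ?case by (auto intro!: typ_ind.ll simp: shiftE_ext)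
next
  case (li1 \<Gamma> M) then show ?case by (auto intro!: typ_ind.li1 simp: shiftE_ext)
next
  case (li2 \<Gamma> M) then show ?case by (auto intro!: typ_ind.li2 simp: shiftE_ext)
next
  case (lc \<Gamma> M) then show ?case by (auto intro!: typ_ind.lc simp: shiftE_ext)
next
  case (mi \<Gamma> \<Delta> M) then show ?case by (auto intro!: typ_ind.mi mi_env_shiftE)
next
  case (mc \<Gamma> \<Delta> M) then show ?case 
    by (auto intro!: typ_ind.mc[OF mc_env_shiftE] simp: Xlift_def)
qed

lemma typable_lift: "typable \<Gamma> M \<Longrightarrow> typable (shiftE k \<Gamma>) (lift k M)"
proof -
  assume "typable \<Gamma> M"
  then have "Xlift (shiftE k \<Gamma>) (lift k M)" by (auto simp: Xlift_def)
  then show ?thesis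
  proof (rule typable.coinduct)
    fix \<Gamma>' M' assume "Xlift \<Gamma>' M'"
    then obtain \<Gamma> M k where "typable \<Gamma> M" "\<Gamma>' = shiftE k \<Gamma>" "M' = lift k M"
      unfolding Xlift_def by blast
    then show "\<exists>\<Gamma> M. \<Gamma>' = \<Gamma> \<and> M' = M \<and> typ_ind (\<lambda>\<Gamma> M. Xlift \<Gamma> M \<or> typable \<Gamma> M) \<Gamma> M"
      using lift_ind typable_iff by blast
  qed
qed



lemma weak_ext: "weak \<Gamma> \<Gamma>' \<Longrightarrow> weak (ext p \<Gamma>) (ext p \<Gamma>')"
  by (auto simp: weak_def ext_apply)

lemma weak_var:
  assumes "weak \<Gamma> \<Gamma>'" "\<Gamma> x = Some p" "shared_only (\<Gamma>(x := None))"
  shows "shared_only (\<Gamma>'(x := None)) \<and> (\<Gamma>' x = Some p \<or> (p = PLin \<and> \<Gamma>' x = Some PSharp))"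
proof
  show "shared_only (\<Gamma>'(x := None))" unfolding shared_only_alt
  proof (intro allI impI)
    fix i q assume h: "(\<Gamma>'(x := None)) i = Some q"
    then have "i \<noteq> x" by auto
    then have "\<Gamma> i = None \<or> (\<exists>r. \<Gamma> i = Some r \<and> shp r)"
      using assms(3)[unfolded shared_only_alt, rule_format, of i] by (cases "\<Gamma> i") auto
    with assms(1) h \<open>i \<noteq> x\<close> show "shp q" unfolding weak_def
      by (metis fun_upd_other option.inject option.simps(3) shp_simps(4))
  qed
  show "\<Gamma>' x = Some p \<or> (p = PLin \<and> \<Gamma>' x = Some PSharp)"
    using assms(1,2) unfolding weak_def by (metis option.distinct(1) option.inject)
qed

lemma weak_app:
  assumes "weak \<Gamma> \<Gamma>'" "app_split \<Gamma> \<Gamma>1 \<Gamma>2"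
  shows "\<exists>\<Gamma>1' \<Gamma>2'. app_split \<Gamma>' \<Gamma>1' \<Gamma>2' \<and> weak \<Gamma>1 \<Gamma>1' \<and> weak \<Gamma>2 \<Gamma>2'"
proof -
  define G1 where "G1 = (\<lambda>i. if \<Gamma>' i = \<Gamma> i then \<Gamma>1 i else \<Gamma>' i)"
  define G2 where "G2 = (\<lambda>i. if \<Gamma>' i = \<Gamma> i then \<Gamma>2 i else \<Gamma>' i)"
  have "((\<Gamma>' i = None \<longrightarrow> G1 i = None \<and> G2 i = None) \<and>
     (\<forall>p. \<Gamma>' i = Some p \<longrightarrow> shp p \<longrightarrow> G1 i = Some p \<and> G2 i = Some p) \<and>
     (\<forall>p. \<Gamma>' i = Some p \<longrightarrow> \<not> shp p \<longrightarrow>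
         (G1 i = Some p \<and> G2 i = None) \<or> (G1 i = None \<and> G2 i = Some p))) \<and>
     (G1 i = \<Gamma>1 i \<or> (\<Gamma>1 i = None \<and> (\<exists>p. G1 i = Some p \<and> shp p)) \<or> (\<Gamma>1 i = Some PLin \<and> G1 i = Some PSharp)) \<and>
     (G2 i = \<Gamma>2 i \<or> (\<Gamma>2 i = None \<and> (\<exists>p. G2 i = Some p \<and> shp p)) \<or> (\<Gamma>2 i = Some PLin \<and> G2 i = Some PSharp))" for i
  proof -
    have w: "\<Gamma>' i = \<Gamma> i \<or> (\<Gamma> i = None \<and> (\<exists>p. \<Gamma>' i = Some p \<and> shp p))
       \<or> (\<Gamma> i = Some PLin \<and> \<Gamma>' i = Some PSharp)" using assms(1) unfolding weak_def by blast
    have s: "(\<Gamma> i = None \<longrightarrow> \<Gamma>1 i = None \<and> \<Gamma>2 i = None) \<and>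
     (\<forall>p. \<Gamma> i = Some p \<longrightarrow> shp p \<longrightarrow> \<Gamma>1 i = Some p \<and> \<Gamma>2 i = Some p) \<and>
     (\<forall>p. \<Gamma> i = Some p \<longrightarrow> \<not> shp p \<longrightarrow>
         (\<Gamma>1 i = Some p \<and> \<Gamma>2 i = None) \<or> (\<Gamma>1 i = None \<and> \<Gamma>2 i = Some p))"
      using assms(2) unfolding app_split_alt by blast
    show ?thesis using w s unfolding G1_def G2_def by (cases "\<Gamma>1 i"; cases "\<Gamma>2 i"; auto)
  qed
  then have "app_split \<Gamma>' G1 G2 \<and> weak \<Gamma>1 G1 \<and> weak \<Gamma>2 G2"
    unfolding app_split_alt weak_def by blast
  then show ?thesis by blast
qed

lemma weak_mi:
  assumes "weak \<Gamma> \<Gamma>'" "mi_env \<Gamma> \<Delta>"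
  shows "mi_env \<Gamma>' (miimg \<Gamma>') \<and> weak \<Delta> (miimg \<Gamma>')"
proof -
  have n: "\<forall>i. \<Gamma> i \<noteq> Some PLin" and d: "\<Delta> = miimg \<Gamma>" using assms(2) unfolding mi_env_iff by auto
  have "\<forall>i. \<Gamma>' i \<noteq> Some PLin"
  proof
    fix i show "\<Gamma>' i \<noteq> Some PLin" using n[rule_format, of i] assms(1)[unfolded weak_def, rule_format, of i] by auto
  qed
  moreover have "weak \<Delta> (miimg \<Gamma>')" unfolding weak_def d
  proof
    fix i
    have w: "\<Gamma>' i = \<Gamma> i \<or> (\<Gamma> i = None \<and> (\<exists>p. \<Gamma>' i = Some p \<and> shp p))"
      using assms(1) n unfolding weak_def by blast
    then show "miimg \<Gamma>' i = miimg \<Gamma> i \<or> miimg \<Gamma> i = None \<and> (\<exists>p. miimg \<Gamma>' i = Some p \<and> shp p) \<or>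
         miimg \<Gamma> i = Some PLin \<and> miimg \<Gamma>' i = Some PSharp"
      using opt_pat_cases[of "\<Gamma>' i"] unfolding miimg_apply by (elim disjE; auto simp: shp_def)
  qed
  ultimately show ?thesis by (simp add: mi_env_iff)
qed

lemma weak_mc:
  assumes "weak \<Gamma> \<Gamma>'" "mc_env \<Gamma> \<Delta>"
  shows "mc_env \<Gamma>' (mcimg \<Gamma>') \<and> weak \<Delta> (mcimg \<Gamma>')"
proof -
  have n: "shared_only \<Gamma>" and d: "\<Delta> = mcimg \<Gamma>" using assms(2) unfolding mc_env_iff by auto
  have w: "\<And>i. \<Gamma>' i = \<Gamma> i \<or> (\<Gamma> i = None \<and> (\<exists>p. \<Gamma>' i = Some p \<and> shp p))"
      using assms(1) n unfolding weak_def shared_only_alt by (metis shp_simps(4))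
  have "shared_only \<Gamma>'" unfolding shared_only_alt
  proof (intro allI impI)
    fix i p assume "\<Gamma>' i = Some p"
    then show "shp p" using n[unfolded shared_only_alt, rule_format, of i] w[of i] by auto
  qed
  moreover have "weak \<Delta> (mcimg \<Gamma>')" unfolding weak_def d
  proof
    fix i
    show "mcimg \<Gamma>' i = mcimg \<Gamma> i \<or> mcimg \<Gamma> i = None \<and> (\<exists>p. mcimg \<Gamma>' i = Some p \<and> shp p) \<or>
         mcimg \<Gamma> i = Some PLin \<and> mcimg \<Gamma>' i = Some PSharp"
      using w[of i] opt_pat_cases[of "\<Gamma>' i"] unfolding mcimg_apply by (elim disjE; auto simp: shp_def)
  qed
  ultimately show ?thesis by (simp add: mc_env_iff)
qed

definition Xweak :: "env \<Rightarrow> trm \<Rightarrow> bool" where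
  "Xweak \<Gamma>' M \<longleftrightarrow> (\<exists>\<Gamma>. typable \<Gamma> M \<and> weak \<Gamma> \<Gamma>')"

lemma weak_ind: "typ_ind typable \<Gamma> M \<Longrightarrow> weak \<Gamma> \<Gamma>' \<Longrightarrow>
   typ_ind (\<lambda>\<Gamma> M. Xweak \<Gamma> M \<or> typable \<Gamma> M) \<Gamma>' M"
proof (induction arbitrary: \<Gamma>' rule: typ_ind.induct)
  case (vl \<Gamma> x) then show ?case using weak_var[OF vl(3,1,2)]
    by (auto intro: typ_ind.vl typ_ind.vd)
next
  case (vd \<Gamma> x) then show ?case using weak_var[OF vd(3,1,2)]
    by (auto intro: typ_ind.vd)
next
  case (va \<Gamma> x) then show ?case using weak_var[OF va(3,1,2)]
    by (auto intro: typ_ind.va)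
next
  case (a \<Gamma> \<Gamma>1 \<Gamma>2 M N) then show ?case using weak_app[OF a(6,1)] by (auto intro: typ_ind.a)
next
  case (ll \<Gamma> M) then show ?case by (auto intro!: typ_ind.ll weak_ext)
next
  case (li1 \<Gamma> M) then show ?case by (auto intro!: typ_ind.li1 weak_ext)
next
  case (li2 \<Gamma> M) then show ?case by (auto intro!: typ_ind.li2 weak_ext)
next
  case (lc \<Gamma> M) then show ?case by (auto intro!: typ_ind.lc weak_ext)
next
  case (mi \<Gamma> \<Delta> M) then show ?case using weak_mi[OF mi(4,1)] by (auto intro!: typ_ind.mi)
next
  case (mc \<Gamma> \<Delta> M) then show ?case using weak_mc[OF mc(3,1)]
    by (auto intro!: typ_ind.mc simp: Xweak_def)
qed

lemma typable_weak: "typable \<Gamma> M \<Longrightarrow> weak \<Gamma> \<Gamma>' \<Longrightarrow> typable \<Gamma>' M"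
proof -
  assume "typable \<Gamma> M" "weak \<Gamma> \<Gamma>'"
  then have "Xweak \<Gamma>' M" by (auto simp: Xweak_def)
  then show ?thesis
  proof (rule typable.coinduct)
    fix \<Gamma>' M' assume "Xweak \<Gamma>' M'"
    then obtain \<Gamma> where "typable \<Gamma> M'" "weak \<Gamma> \<Gamma>'"
      unfolding Xweak_def by blast
    then show "\<exists>\<Gamma> M. \<Gamma>' = \<Gamma> \<and> M' = M \<and> typ_ind (\<lambda>\<Gamma> M. Xweak \<Gamma> M \<or> typable \<Gamma> M) \<Gamma> M"
      using weak_ind typable_iff by blast
  qed
qed



fun argok :: "pat option \<Rightarrow> env \<Rightarrow> trm \<Rightarrow> bool" where
  "argok None G P = shared_only G"
| "argok (Some PLin) G P = typable G P"
| "argok (Some PSharp) G P = (shared_only G \<and> typable G P)"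
| "argok (Some PDag) G P = ((\<forall>i p. G i = Some p \<longrightarrow> p = PDag) \<and> typable G P)"
| "argok (Some PCo) G P = (shared_only G \<and> typable G (BoxC P))"
| "argok (Some PInd) G P = typable G (BoxI P)"

lemma typ_ind_R: "typ_ind typable \<Gamma> M \<Longrightarrow> typ_ind (\<lambda>\<Gamma> M. X \<Gamma> M \<or> typable \<Gamma> M) \<Gamma> M"
  using typ_ind_mono[of typable "\<lambda>\<Gamma> M. X \<Gamma> M \<or> typable \<Gamma> M"] by (auto simp: le_fun_def)

lemma typable_R: "typable \<Gamma> M \<Longrightarrow> typ_ind (\<lambda>\<Gamma> M. X \<Gamma> M \<or> typable \<Gamma> M) \<Gamma> M"
  using typ_ind_R typable_iff by blast

lemma typable_BoxI_inv: "typable G (BoxI P) \<Longrightarrow> mi_env G (miimg G) \<and> typable (miimg G) P"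
  by (auto simp: typable_iff[of G] elim: typ_ind.cases simp: mi_env_iff typable_iff)

lemma typable_BoxC_inv: "typable G (BoxC P) \<Longrightarrow> mc_env G (mcimg G) \<and> typable (mcimg G) P"
  by (auto simp: typable_iff[of G] elim: typ_ind.cases simp: mc_env_iff)

lemma typable_BoxC_intro: "mc_env G D \<Longrightarrow> typable D P \<Longrightarrow> typable G (BoxC P)"
  by (auto simp: typable_iff[of G] intro: typ_ind.mc)

lemma argok_shared: "q \<noteq> Some PLin \<Longrightarrow> q \<noteq> Some PInd \<Longrightarrow> argok q G P \<Longrightarrow> shared_only G"
  using opt_pat_cases[of q] by (elim disjE; force simp: shared_only_alt)

lemma argok_noLin: "q \<noteq> Some PLin \<Longrightarrow> argok q G P \<Longrightarrow> \<forall>i. G i \<noteq> Some PLin"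
proof (cases "q = Some PInd")
  case True
  assume "argok q G P"
  with True have "typable G (BoxI P)" by simp
  then show ?thesis using typable_BoxI_inv mi_env_iff by blast
next
  case False
  assume "q \<noteq> Some PLin" "argok q G P"
  with False have "shared_only G" using argok_shared by blast
  then show ?thesis by (metis shared_only_alt shp_simps(4))
qed

lemma argok_typable: "q \<in> {Some PLin, Some PSharp, Some PDag} \<Longrightarrow> argok q G P \<Longrightarrow> typable G P"
  by auto

lemma argok_lift: "argok q G P \<Longrightarrow> argok q (shiftE 0 G) (lift 0 P)"
  using opt_pat_cases[of q]
  by (elim disjE) (auto simp: shared_only_shiftE dest: typable_lift[where k=0]
         simp del: lift_simps simp add: lift_simps[symmetric], auto simp: shiftE_def split: if_splits)



lemma del_ext: "del (Suc k) (ext p \<Gamma>) = ext p (del k \<Gamma>)"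
  by (auto simp: fun_eq_iff del_def ext_apply)
lemma merge_ext: "merge (ext p A) (shiftE 0 B) = ext p (merge A B)"
  by (auto simp: fun_eq_iff merge_def ext_apply shiftE_def)
lemma compat_ext: "compat A B \<Longrightarrow> compat (ext p A) (shiftE 0 B)"
  by (auto simp: compat_def ext_apply shiftE_def)
lemma ext_Suc[simp]: "ext p \<Gamma> (Suc k) = \<Gamma> k"
  by (simp add: ext_apply)

lemma merge_apply: "merge A B i = (case A i of None \<Rightarrow> B i | Some p \<Rightarrow> Some p)"
  by (simp add: merge_def)

lemma del_apply: "del k \<Gamma> i = (if i < k then \<Gamma> i else \<Gamma> (Suc i))"
  by (simp add: del_def)

lemma var_k_weak:
  assumes "shared_only (\<Gamma>(k := None))" "compat (del k \<Gamma>) G"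
  shows "weak G (merge (del k \<Gamma>) G)"
  unfolding weak_def
proof
  fix i
  have s: "del k \<Gamma> i = None \<or> (\<exists>p. del k \<Gamma> i = Some p \<and> shp p)"
  proof (cases "del k \<Gamma> i")
    case (Some p)
    have e: "\<Gamma> (if i < k then i else Suc i) = Some p" using Some by (cases "i < k") (auto simp: del_apply)
    have "(if i < k then i else Suc i) \<noteq> k" by auto
    then have "shp p" using e assms(1)[unfolded shared_only_alt, rule_format, of "if i < k then i else Suc i" p]
      by simp
    then show ?thesis using Some by blast
  next
    case None then show ?thesis by blast
  qed
  show "merge (del k \<Gamma>) G i = G i \<or> G i = None \<and> (\<exists>p. merge (del k \<Gamma>) G i = Some p \<and> shp p) \<or>
         G i = Some PLin \<and> merge (del k \<Gamma>) G i = Some PSharp"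
  proof (cases "G i")
    case None
    then have "merge (del k \<Gamma>) G i = del k \<Gamma> i" by (cases "del k \<Gamma> i") (simp_all add: merge_apply)
    then show ?thesis using s None by auto
  next
    case (Some q)
    have "merge (del k \<Gamma>) G i = Some q"
    proof (cases "del k \<Gamma> i")
      case (Some p) then have "p = q" using \<open>G i = Some q\<close> assms(2) unfolding compat_def by blast
      then show ?thesis using Some by (simp add: merge_apply)
    qed (simp add: merge_apply Some)
    then show ?thesis using Some by simp
  qed
qed

lemma var_other:
  assumes "\<Gamma> x = Some u" "x \<noteq> k" "shared_only (\<Gamma>(x := None))" "shared_only G"
  shows "merge (del k \<Gamma>) G (if x < k then x else x - 1) = Some u
     \<and> shared_only ((merge (del k \<Gamma>) G)((if x < k then x else x - 1) := None))"
proof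
  show "merge (del k \<Gamma>) G (if x < k then x else x - 1) = Some u"
    using assms(1,2) by (auto simp: merge_apply del_apply)
  show "shared_only ((merge (del k \<Gamma>) G)((if x < k then x else x - 1) := None))"
    unfolding shared_only_alt
  proof (intro allI impI)
    fix i p assume h: "((merge (del k \<Gamma>) G)((if x < k then x else x - 1) := None)) i = Some p"
    show "shp p"
    proof (cases "del k \<Gamma> i")
      case None 
      have "i \<noteq> (if x < k then x else x - 1)" using h by auto
      then have "G i = Some p" using h None by (simp add: merge_apply)
      then show ?thesis using assms(4) unfolding shared_only_alt by blast
    next
      case (Some q)
      have "i \<noteq> (if x < k then x else x - 1)" using h by auto
      then have "(if i < k then i else Suc i) \<noteq> x" using assms(2) by auto
      moreover have "p = q" using h Some \<open>i \<noteq> _\<close> by (simp add: merge_apply)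
      moreover have "\<Gamma> (if i < k then i else Suc i) = Some q" using Some by (cases "i < k") (auto simp: del_apply)
      ultimately have "(\<Gamma>(x := None)) (if i < k then i else Suc i) = Some q" "p = q" by simp_all
      then show ?thesis using assms(3) unfolding shared_only_alt by blast
    qed
  qed
qed

definition mrg :: "pat option \<Rightarrow> pat option \<Rightarrow> pat option" where
  "mrg a b = (case a of None \<Rightarrow> b | Some p \<Rightarrow> Some p)"
definition shv :: "pat option \<Rightarrow> pat option" where
  "shv b = (case b of Some p \<Rightarrow> if shp p then Some p else None | None \<Rightarrow> None)"
definition split3 :: "pat option \<Rightarrow> pat option \<Rightarrow> pat option \<Rightarrow> bool" where
  "split3 c c1 c2 \<longleftrightarrow> (c = None \<longrightarrow> c1 = None \<and> c2 = None) \<and>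
     (\<forall>p. c = Some p \<longrightarrow> shp p \<longrightarrow> c1 = Some p \<and> c2 = Some p) \<and>
     (\<forall>p. c = Some p \<longrightarrow> \<not> shp p \<longrightarrow> (c1 = Some p \<and> c2 = None) \<or> (c1 = None \<and> c2 = Some p))"

lemma split3_merge:
  assumes "split3 a a1 a2" "\<forall>p q. a = Some p \<longrightarrow> b = Some q \<longrightarrow> p = q \<and> shp p"
    "(b1 = b \<and> b2 = shv b) \<or> (b1 = shv b \<and> b2 = b)"
  shows "split3 (mrg a b) (mrg a1 b1) (mrg a2 b2)"
proof (cases a)
  case None
  then have "a1 = None" "a2 = None" using assms(1) unfolding split3_def by auto
  have b1: "split3 b b (shv b)" "split3 b (shv b) b"
    unfolding split3_def shv_def by (cases b; simp)+
  show ?thesis using None \<open>a1 = None\<close> \<open>a2 = None\<close> assms(3) b1 unfolding mrg_def by auto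
next
  case (Some p)
  show ?thesis
  proof (cases "shp p")
    case True
    then have "a1 = Some p" "a2 = Some p" using assms(1) Some unfolding split3_def by auto
    then show ?thesis using Some True unfolding mrg_def split3_def by simp
  next
    case False
    then have "b = None" using assms(2) Some by (cases b) auto
    then have "b1 = None" "b2 = None" using assms(3) unfolding shv_def by auto
    have "(a1 = Some p \<and> a2 = None) \<or> (a1 = None \<and> a2 = Some p)" using assms(1) Some False
      unfolding split3_def by auto
    then show ?thesis using Some False \<open>b1 = None\<close> \<open>b2 = None\<close> \<open>b = None\<close>
      unfolding mrg_def split3_def by auto
  qed
qed

lemma app_split_split3: "app_split \<Gamma> \<Gamma>1 \<Gamma>2 \<longleftrightarrow> (\<forall>i. split3 (\<Gamma> i) (\<Gamma>1 i) (\<Gamma>2 i))"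
  by (simp only: app_split_alt split3_def)

lemma sub_app:
  assumes sp: "app_split \<Gamma> \<Gamma>1 \<Gamma>2" and ok: "argok (\<Gamma> k) G P" and c: "compat (del k \<Gamma>) G"
  defines "G1 \<equiv> (if \<Gamma>1 k = None then shpart G else G)"
  defines "G2 \<equiv> (if \<Gamma>2 k = None then shpart G else G)"
  shows "app_split (merge (del k \<Gamma>) G) (merge (del k \<Gamma>1) G1) (merge (del k \<Gamma>2) G2)
     \<and> argok (\<Gamma>1 k) G1 P \<and> argok (\<Gamma>2 k) G2 P \<and> compat (del k \<Gamma>1) G1 \<and> compat (del k \<Gamma>2) G2"
proof -
  have spk: "split3 (\<Gamma> k) (\<Gamma>1 k) (\<Gamma>2 k)" using sp app_split_split3 by blast
  have shG: "shared_only G" if h: "\<Gamma> k = None \<or> (\<exists>p. \<Gamma> k = Some p \<and> shp p)"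
  proof -
    have "\<Gamma> k \<noteq> Some PLin" "\<Gamma> k \<noteq> Some PInd" using h by auto
    then show ?thesis using argok_shared ok by blast
  qed
  have shpart_id: "shpart G = G" if sh: "shared_only G"
  proof (rule ext)
    fix i show "shpart G i = G i"
    proof (cases "G i")
      case (Some p)
      then have "shp p" using sh unfolding shared_only_alt by blast
      then show ?thesis using Some by (simp add: shpart_def)
    qed (simp add: shpart_def)
  qed
  have shpart_apply: "shpart G i = shv (G i)" for i by (simp add: shpart_def shv_def)
  have shv_id: "shv (G i) = G i" if sh: "shared_only G" for i
    using shpart_apply[of i] shpart_id[OF sh] by simp
  have disj: "(G1 i = G i \<and> G2 i = shv (G i)) \<or> (G1 i = shv (G i) \<and> G2 i = G i)" for i
  proof -
    consider (n) "\<Gamma> k = None" | (s) p where "\<Gamma> k = Some p" "shp p" | (l) p where "\<Gamma> k = Some p" "\<not> shp p"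
      by (cases "\<Gamma> k") auto
    then show ?thesis
    proof cases
      case n then have "\<Gamma>1 k = None" "\<Gamma>2 k = None" using spk unfolding split3_def by auto
      then show ?thesis using shv_id shG n unfolding G1_def G2_def shpart_apply by auto
    next
      case s then have "\<Gamma>1 k \<noteq> None" "\<Gamma>2 k \<noteq> None" using spk unfolding split3_def by auto
      then show ?thesis using shv_id shG s unfolding G1_def G2_def by auto
    next
      case l then have "(\<Gamma>1 k \<noteq> None \<and> \<Gamma>2 k = None) \<or> (\<Gamma>1 k = None \<and> \<Gamma>2 k \<noteq> None)"
        using spk unfolding split3_def by auto
      then show ?thesis unfolding G1_def G2_def shpart_apply by auto
    qed
  qed
  have cmp: "\<forall>p q. del k \<Gamma> i = Some p \<longrightarrow> G i = Some q \<longrightarrow> p = q \<and> shp p" for i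
    using c unfolding compat_def by blast
  have sp_del: "split3 (del k \<Gamma> i) (del k \<Gamma>1 i) (del k \<Gamma>2 i)" for i
    using sp[unfolded app_split_split3] by (simp add: del_apply)
  have "split3 (merge (del k \<Gamma>) G i) (merge (del k \<Gamma>1) G1 i) (merge (del k \<Gamma>2) G2 i)" for i
    using split3_merge[OF sp_del cmp disj, of i] unfolding merge_apply mrg_def .
  then have A: "app_split (merge (del k \<Gamma>) G) (merge (del k \<Gamma>1) G1) (merge (del k \<Gamma>2) G2)"
    unfolding app_split_split3 by blast
  have sub: "del k \<Gamma>j i = Some p \<Longrightarrow> split3 (del k \<Gamma> i) (del k \<Gamma>1 i) (del k \<Gamma>2 i) \<Longrightarrow>
     \<Gamma>j = \<Gamma>1 \<or> \<Gamma>j = \<Gamma>2 \<Longrightarrow> del k \<Gamma> i = Some p" for \<Gamma>j i p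
    unfolding split3_def by (cases "del k \<Gamma> i") auto
  have Gsub1: "G1 i = Some q \<Longrightarrow> G i = Some q" for i q
    unfolding G1_def by (cases "G i") (auto simp: shpart_def split: if_splits)
  have Gsub2: "G2 i = Some q \<Longrightarrow> G i = Some q" for i q
    unfolding G2_def by (cases "G i") (auto simp: shpart_def split: if_splits)
  have C1: "compat (del k \<Gamma>1) G1" unfolding compat_def
  proof (intro allI impI)
    fix i p q assume a: "del k \<Gamma>1 i = Some p" "G1 i = Some q"
    have "del k \<Gamma> i = Some p" using sub[OF a(1) sp_del] by blast
    moreover have "G i = Some q" using Gsub1 a(2) by blast
    ultimately show "p = q \<and> shp p" using cmp by blast
  qed
  have C2: "compat (del k \<Gamma>2) G2" unfolding compat_def
  proof (intro allI impI)
    fix i p q assume a: "del k \<Gamma>2 i = Some p" "G2 i = Some q"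
    have "del k \<Gamma> i = Some p" using sub[OF a(1) sp_del] by blast
    moreover have "G i = Some q" using Gsub2 a(2) by blast
    ultimately show "p = q \<and> shp p" using cmp by blast
  qed
  have shs: "shared_only (shpart G)" unfolding shared_only_alt
  proof (intro allI impI)
    fix i p assume "shpart G i = Some p" then show "shp p"
      by (cases "G i") (auto simp: shpart_def split: if_splits)
  qed
  have O1: "argok (\<Gamma>1 k) G1 P"
  proof (cases "\<Gamma>1 k = None")
    case True then show ?thesis using shs unfolding G1_def by simp
  next
    case False then have "\<Gamma>1 k = \<Gamma> k" using spk unfolding split3_def by (cases "\<Gamma> k") auto
    moreover have "G1 = G" using False unfolding G1_def by auto
    ultimately show ?thesis using ok by simp
  qed
  have O2: "argok (\<Gamma>2 k) G2 P"
  proof (cases "\<Gamma>2 k = None")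
    case True then show ?thesis using shs unfolding G2_def by simp
  next
    case False then have "\<Gamma>2 k = \<Gamma> k" using spk unfolding split3_def by (cases "\<Gamma> k") auto
    moreover have "G2 = G" using False unfolding G2_def by auto
    ultimately show ?thesis using ok by simp
  qed
  show ?thesis using A O1 O2 C1 C2 by blast
qed



fun mi1 :: "pat option \<Rightarrow> pat option" where
  "mi1 None = None" | "mi1 (Some PInd) = Some PLin" | "mi1 (Some PSharp) = None"
| "mi1 (Some PLin) = Some PLin" | "mi1 (Some PCo) = Some PCo" | "mi1 (Some PDag) = Some PDag"
fun mc1 :: "pat option \<Rightarrow> pat option" where
  "mc1 None = None" | "mc1 (Some PInd) = Some PInd" | "mc1 (Some PSharp) = None"
| "mc1 (Some PLin) = Some PLin" | "mc1 (Some PCo) = Some PDag" | "mc1 (Some PDag) = Some PDag"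

lemma miimg_1: "miimg G i = mi1 (G i)"
  using opt_pat_cases[of "G i"] by (elim disjE) (simp_all add: miimg_def)
lemma mcimg_1: "mcimg G i = mc1 (G i)"
  using opt_pat_cases[of "G i"] by (elim disjE) (simp_all add: mcimg_def)

lemma shared_only_i: "shared_only G \<Longrightarrow> G i = None \<or> G i = Some PSharp \<or> G i = Some PCo \<or> G i = Some PDag"
  unfolding shared_only_def by (cases "G i") auto

lemma shared_only_I: "(\<And>i. G i = None \<or> G i = Some PSharp \<or> G i = Some PCo \<or> G i = Some PDag) \<Longrightarrow> shared_only G"
  unfolding shared_only_def by (metis insertCI insert_commute option.distinct(1) option.inject)

definition dag :: "env \<Rightarrow> bool" where "dag G \<longleftrightarrow> (\<forall>i p. G i = Some p \<longrightarrow> p = PDag)"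

lemma dag_i: "dag G \<Longrightarrow> G i = None \<or> G i = Some PDag"
  unfolding dag_def by (cases "G i") auto

lemma argok_dag: "argok (Some PDag) G P = (dag G \<and> typable G P)"
  by (simp add: dag_def)

lemma miimg_shared: assumes sh: "shared_only G" shows "shared_only (miimg G)"
proof (rule shared_only_I)
  fix i show "miimg G i = None \<or> miimg G i = Some PSharp \<or> miimg G i = Some PCo \<or> miimg G i = Some PDag"
    using shared_only_i[OF sh, of i] by (elim disjE; simp add: miimg_1)
qed
lemma mcimg_shared: assumes sh: "shared_only G" shows "shared_only (mcimg G)"
proof (rule shared_only_I)
  fix i show "mcimg G i = None \<or> mcimg G i = Some PSharp \<or> mcimg G i = Some PCo \<or> mcimg G i = Some PDag"
    using shared_only_i[OF sh, of i] by (elim disjE; simp add: mcimg_1)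
qed
lemma mcimg_dag: assumes sh: "shared_only G" shows "dag (mcimg G)"
  unfolding dag_def
proof (intro allI impI)
  fix i p assume h: "mcimg G i = Some p"
  show "p = PDag" using shared_only_i[OF sh, of i] h by (elim disjE; simp add: mcimg_1)
qed
lemma mcimg_miimg: assumes sh: "shared_only G" shows "mcimg (miimg G) = mcimg G"
proof (rule ext)
  fix i show "mcimg (miimg G) i = mcimg G i"
    using shared_only_i[OF sh, of i] by (elim disjE; simp add: mcimg_1 miimg_1)
qed
lemma miimg_dag: assumes d: "dag G" shows "miimg G = G"
proof (rule ext)
  fix i show "miimg G i = G i" using dag_i[OF d, of i] by (elim disjE; simp add: miimg_1)
qed
lemma mcimg_dagid: assumes d: "dag G" shows "mcimg G = G"
proof (rule ext)
  fix i show "mcimg G i = G i" using dag_i[OF d, of i] by (elim disjE; simp add: mcimg_1)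
qed
lemma dag_shared: assumes d: "dag G" shows "shared_only G"
proof (rule shared_only_I)
  fix i show "G i = None \<or> G i = Some PSharp \<or> G i = Some PCo \<or> G i = Some PDag"
    using dag_i[OF d, of i] by blast
qed

lemma del_miimg: "del k (miimg G) = miimg (del k G)"
  by (simp add: fun_eq_iff del_apply miimg_1)
lemma del_mcimg: "del k (mcimg G) = mcimg (del k G)"
  by (simp add: fun_eq_iff del_apply mcimg_1)

lemma compat_i: "compat A B \<Longrightarrow> A i = Some p \<Longrightarrow> B i = Some q \<Longrightarrow> p = q \<and> shp p"
  unfolding compat_def by blast

lemma mi1_merge: "(\<forall>p q. a = Some p \<longrightarrow> b = Some q \<longrightarrow> p = q \<and> shp p) \<Longrightarrow>
  mi1 (case a of None \<Rightarrow> b | Some p \<Rightarrow> Some p) = (case mi1 a of None \<Rightarrow> mi1 b | Some p \<Rightarrow> Some p)"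
  using opt_pat_cases[of a] opt_pat_cases[of b] by (elim disjE; simp)
lemma mc1_merge: "(\<forall>p q. a = Some p \<longrightarrow> b = Some q \<longrightarrow> p = q \<and> shp p) \<Longrightarrow>
  mc1 (case a of None \<Rightarrow> b | Some p \<Rightarrow> Some p) = (case mc1 a of None \<Rightarrow> mc1 b | Some p \<Rightarrow> Some p)"
  using opt_pat_cases[of a] opt_pat_cases[of b] by (elim disjE; simp)

lemma compat_ii: "compat A B \<Longrightarrow> \<forall>p q. A i = Some p \<longrightarrow> B i = Some q \<longrightarrow> p = q \<and> shp p"
  unfolding compat_def by blast

lemma miimg_merge: "compat A B \<Longrightarrow> miimg (merge A B) = merge (miimg A) (miimg B)"
proof (rule ext)
  fix i assume c: "compat A B"
  show "miimg (merge A B) i = merge (miimg A) (miimg B) i"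
    unfolding miimg_1 merge_apply using mi1_merge[OF compat_ii[OF c, of i]] by simp
qed
lemma mcimg_merge: "compat A B \<Longrightarrow> mcimg (merge A B) = merge (mcimg A) (mcimg B)"
proof (rule ext)
  fix i assume c: "compat A B"
  show "mcimg (merge A B) i = merge (mcimg A) (mcimg B) i"
    unfolding mcimg_1 merge_apply using mc1_merge[OF compat_ii[OF c, of i]] by simp
qed

lemma mi1_compat: "(\<forall>p q. a = Some p \<longrightarrow> b = Some q \<longrightarrow> p = q \<and> shp p) \<Longrightarrow>
  (\<forall>p q. mi1 a = Some p \<longrightarrow> mi1 b = Some q \<longrightarrow> p = q \<and> shp p)"
  using opt_pat_cases[of a] opt_pat_cases[of b] by (elim disjE; simp)
lemma mc1_compat: "(\<forall>p q. a = Some p \<longrightarrow> b = Some q \<longrightarrow> p = q \<and> shp p) \<Longrightarrow>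
  (\<forall>p q. mc1 a = Some p \<longrightarrow> mc1 b = Some q \<longrightarrow> p = q \<and> shp p)"
  using opt_pat_cases[of a] opt_pat_cases[of b] by (elim disjE; simp)

lemma compat_miimg: "compat A B \<Longrightarrow> compat (miimg A) (miimg B)"
proof -
  assume c: "compat A B"
  show ?thesis unfolding compat_def miimg_1
  proof (rule allI)
    fix i show "\<forall>p q. mi1 (A i) = Some p \<longrightarrow> mi1 (B i) = Some q \<longrightarrow> p = q \<and> shp p"
      using mi1_compat[OF compat_ii[OF c, of i]] .
  qed
qed
lemma compat_mcimg: "compat A B \<Longrightarrow> compat (mcimg A) (mcimg B)"
proof -
  assume c: "compat A B"
  show ?thesis unfolding compat_def mcimg_1
  proof (rule allI)
    fix i show "\<forall>p q. mc1 (A i) = Some p \<longrightarrow> mc1 (B i) = Some q \<longrightarrow> p = q \<and> shp p"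
      using mc1_compat[OF compat_ii[OF c, of i]] .
  qed
qed

lemma noLin_merge: assumes a: "\<forall>i. A i \<noteq> Some PLin" and b: "\<forall>i. B i \<noteq> Some PLin"
  shows "\<forall>i. merge A B i \<noteq> Some PLin"
proof
  fix i show "merge A B i \<noteq> Some PLin" using a[rule_format, of i] b[rule_format, of i]
    by (cases "A i") (simp_all add: merge_apply)
qed

lemma noLin_del: "(\<forall>i. A i \<noteq> Some PLin) \<Longrightarrow> (\<forall>i. del k A i \<noteq> Some PLin)"
  unfolding del_apply by simp

lemma shared_merge: assumes a: "shared_only A" and b: "shared_only B" shows "shared_only (merge A B)"
proof (rule shared_only_I)
  fix i show "merge A B i = None \<or> merge A B i = Some PSharp \<or> merge A B i = Some PCo \<or> merge A B i = Some PDag"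
    using shared_only_i[OF a, of i] shared_only_i[OF b, of i] by (cases "A i") (auto simp: merge_apply)
qed
lemma shared_del: assumes a: "shared_only A" shows "shared_only (del k A)"
proof (rule shared_only_I)
  fix i show "del k A i = None \<or> del k A i = Some PSharp \<or> del k A i = Some PCo \<or> del k A i = Some PDag"
    using shared_only_i[OF a, of "if i < k then i else Suc i"] by (simp add: del_apply split: if_splits)
qed

lemma sub_mi:
  assumes mi: "mi_env \<Gamma> \<Delta>" and ok: "argok (\<Gamma> k) G P" and c: "compat (del k \<Gamma>) G"
  shows "mi_env (merge (del k \<Gamma>) G) (merge (del k \<Delta>) (miimg G))
     \<and> argok (\<Delta> k) (miimg G) P \<and> compat (del k \<Delta>) (miimg G)"
proof -
  have nl: "\<forall>i. \<Gamma> i \<noteq> Some PLin" and D: "\<Delta> = miimg \<Gamma>" using mi unfolding mi_env_iff by auto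
  have "\<Gamma> k \<noteq> Some PLin" using nl by blast
  then have nlG: "\<forall>i. G i \<noteq> Some PLin" using argok_noLin ok by blast
  have 1: "mi_env (merge (del k \<Gamma>) G) (merge (del k \<Delta>) (miimg G))"
    unfolding mi_env_iff D del_miimg miimg_merge[OF c, symmetric]
    using noLin_merge[OF noLin_del[OF nl] nlG] by blast
  have 3: "compat (del k \<Delta>) (miimg G)" unfolding D del_miimg using compat_miimg[OF c] .
  have 2: "argok (\<Delta> k) (miimg G) P"
  proof -
    have dk: "\<Delta> k = mi1 (\<Gamma> k)" unfolding D miimg_1 ..
    consider "\<Gamma> k = None" | "\<Gamma> k = Some PInd" | "\<Gamma> k = Some PSharp" | "\<Gamma> k = Some PCo" | "\<Gamma> k = Some PDag"
    proof -
      have "\<Gamma> k \<noteq> Some PLin" using nl by blast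
      then show "(\<Gamma> k = None \<Longrightarrow> thesis) \<Longrightarrow> (\<Gamma> k = Some PInd \<Longrightarrow> thesis) \<Longrightarrow> (\<Gamma> k = Some PSharp \<Longrightarrow> thesis) \<Longrightarrow> (\<Gamma> k = Some PCo \<Longrightarrow> thesis) \<Longrightarrow> (\<Gamma> k = Some PDag \<Longrightarrow> thesis) \<Longrightarrow> thesis"
        using opt_pat_cases[of "\<Gamma> k"] by auto
    qed
    then show ?thesis
    proof cases
      case 1 then show ?thesis using ok dk miimg_shared by simp
    next
      case 2 then show ?thesis using ok dk typable_BoxI_inv by simp
    next
      case 3 then show ?thesis using ok dk miimg_shared by simp
    next
      case 4
      then have sh: "shared_only G" and t: "typable G (BoxC P)" using ok by auto
      then have "typable (mcimg G) P" using typable_BoxC_inv by blast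
      moreover have "mc_env (miimg G) (mcimg G)"
        unfolding mc_env_iff using miimg_shared[OF sh] mcimg_miimg[OF sh] by simp
      ultimately have "typable (miimg G) (BoxC P)" using typable_BoxC_intro by blast
      then show ?thesis using 4 dk miimg_shared[OF sh] by simp
    next
      case 5
      have dg: "dag G" "typable G P" using ok 5 by (simp_all add: dag_def)
      then have "miimg G = G" using miimg_dag by blast
      then show ?thesis using 5 dk dg by (simp add: dag_def)
    qed
  qed
  show ?thesis using 1 2 3 by blast
qed

lemma sub_mc:
  assumes mc: "mc_env \<Gamma> \<Delta>" and ok: "argok (\<Gamma> k) G P" and c: "compat (del k \<Gamma>) G"
  shows "mc_env (merge (del k \<Gamma>) G) (merge (del k \<Delta>) (mcimg G))
     \<and> argok (\<Delta> k) (mcimg G) P \<and> compat (del k \<Delta>) (mcimg G)"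
proof -
  have sh: "shared_only \<Gamma>" and D: "\<Delta> = mcimg \<Gamma>" using mc unfolding mc_env_iff by auto
  have gk: "\<Gamma> k = None \<or> \<Gamma> k = Some PSharp \<or> \<Gamma> k = Some PCo \<or> \<Gamma> k = Some PDag"
    using shared_only_i[OF sh] .
  have "\<Gamma> k \<noteq> Some PLin" "\<Gamma> k \<noteq> Some PInd" using gk by auto
  then have shG: "shared_only G" using argok_shared ok by blast
  have 1: "mc_env (merge (del k \<Gamma>) G) (merge (del k \<Delta>) (mcimg G))"
    unfolding mc_env_iff D del_mcimg mcimg_merge[OF c, symmetric]
    using shared_merge[OF shared_del[OF sh] shG] by blast
  have 3: "compat (del k \<Delta>) (mcimg G)" unfolding D del_mcimg using compat_mcimg[OF c] .
  have 2: "argok (\<Delta> k) (mcimg G) P"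
  proof -
    have dk: "\<Delta> k = mc1 (\<Gamma> k)" unfolding D mcimg_1 ..
    from gk show ?thesis
    proof (elim disjE)
      assume "\<Gamma> k = None" then show ?thesis using dk mcimg_shared[OF shG] by simp
    next
      assume "\<Gamma> k = Some PSharp" then show ?thesis using dk mcimg_shared[OF shG] by simp
    next
      assume h: "\<Gamma> k = Some PCo"
      then have "typable G (BoxC P)" using ok by simp
      then have "typable (mcimg G) P" using typable_BoxC_inv by blast
      then show ?thesis using h dk mcimg_dag[OF shG] by (simp add: dag_def)
    next
      assume h: "\<Gamma> k = Some PDag"
      then have dg: "dag G" "typable G P" using ok by (simp_all add: dag_def)
      then have "mcimg G = G" using mcimg_dagid by blast
      then show ?thesis using h dk dg by (simp add: dag_def)
    qed
  qed
  show ?thesis using 1 2 3 by blast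
qed



definition Xsub :: "env \<Rightarrow> trm \<Rightarrow> bool" where
  "Xsub Gr M' \<longleftrightarrow> (\<exists>\<Gamma> M k P G. typable \<Gamma> M \<and> argok (\<Gamma> k) G P \<and> compat (del k \<Gamma>) G
      \<and> Gr = merge (del k \<Gamma>) G \<and> M' = substs k P M)"

lemma sub_var:
  assumes gx: "\<Gamma> x = Some u" and u: "u = PLin \<or> u = PSharp \<or> u = PDag"
    and sh: "shared_only (\<Gamma>(x := None))" and ok: "argok (\<Gamma> k) G P" and c: "compat (del k \<Gamma>) G"
  shows "typ_ind (\<lambda>\<Gamma> M. X \<Gamma> M \<or> typable \<Gamma> M) (merge (del k \<Gamma>) G) (substs k P (Var x))"
proof (cases "x = k")
  case True
  then have "typable G P" using ok gx u by auto
  moreover have "weak G (merge (del k \<Gamma>) G)" using var_k_weak sh c True by blast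
  ultimately have "typable (merge (del k \<Gamma>) G) P" by (rule typable_weak)
  then show ?thesis using True by (simp add: substs_var typable_R)
next
  case False
  have "(\<Gamma>(x := None)) k = \<Gamma> k" using False by simp
  then have "\<Gamma> k = None \<or> \<Gamma> k = Some PSharp \<or> \<Gamma> k = Some PCo \<or> \<Gamma> k = Some PDag"
    using shared_only_i[OF sh, of k] by simp
  then have "\<Gamma> k \<noteq> Some PLin" "\<Gamma> k \<noteq> Some PInd" by auto
  then have shG: "shared_only G" using argok_shared ok by blast
  have v: "merge (del k \<Gamma>) G (if x < k then x else x - 1) = Some u
     \<and> shared_only ((merge (del k \<Gamma>) G)((if x < k then x else x - 1) := None))"
    using var_other[OF gx False sh shG] .
  have e: "substs k P (Var x) = Var (if x < k then x else x - 1)" using False by (simp add: substs_var)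
  from u show ?thesis
  proof (elim disjE)
    assume "u = PLin" then show ?thesis using v e typ_ind.vl by metis
  next
    assume "u = PSharp" then show ?thesis using v e typ_ind.vd by metis
  next
    assume "u = PDag" then show ?thesis using v e typ_ind.va by metis
  qed
qed

lemma sub_binder:
  assumes "argok (\<Gamma> k) G P" "compat (del k \<Gamma>) G"
  shows "argok (ext p \<Gamma> (Suc k)) (shiftE 0 G) (lift 0 P)"
    "compat (del (Suc k) (ext p \<Gamma>)) (shiftE 0 G)"
    "merge (del (Suc k) (ext p \<Gamma>)) (shiftE 0 G) = ext p (merge (del k \<Gamma>) G)"
  using assms by (simp_all add: argok_lift del_ext compat_ext merge_ext)

lemma sub_ind: "typ_ind typable \<Gamma> M \<Longrightarrow> argok (\<Gamma> k) G P \<Longrightarrow> compat (del k \<Gamma>) G \<Longrightarrow>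
   typ_ind (\<lambda>\<Gamma> M. Xsub \<Gamma> M \<or> typable \<Gamma> M) (merge (del k \<Gamma>) G) (substs k P M)"
proof (induction arbitrary: k P G rule: typ_ind.induct)
  case (vl \<Gamma> x) then show ?case using sub_var by blast
next
  case (vd \<Gamma> x) then show ?case using sub_var by blast
next
  case (va \<Gamma> x) then show ?case using sub_var by blast
next
  case (a \<Gamma> \<Gamma>1 \<Gamma>2 M N)
  note s = sub_app[OF a.hyps(1) a.prems(1) a.prems(2)]
  have s1: "argok (\<Gamma>1 k) (if \<Gamma>1 k = None then shpart G else G) P"
    "compat (del k \<Gamma>1) (if \<Gamma>1 k = None then shpart G else G)"
    "argok (\<Gamma>2 k) (if \<Gamma>2 k = None then shpart G else G) P"
    "compat (del k \<Gamma>2) (if \<Gamma>2 k = None then shpart G else G)"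
    using s by blast+
  show ?case using s a.IH(1)[OF s1(1,2)] a.IH(2)[OF s1(3,4)]
    by (auto intro: typ_ind.a)
next
  case (ll \<Gamma> M)
  note b = sub_binder[OF ll(3,4), of PLin]
  show ?case using ll(2)[OF b(1,2)] b(3) by (auto intro: typ_ind.ll)
next
  case (li1 \<Gamma> M)
  note b = sub_binder[OF li1(3,4), of PSharp]
  show ?case using li1(2)[OF b(1,2)] b(3) by (auto intro: typ_ind.li1)
next
  case (li2 \<Gamma> M)
  note b = sub_binder[OF li2(3,4), of PInd]
  show ?case using li2(2)[OF b(1,2)] b(3) by (auto intro: typ_ind.li2)
next
  case (lc \<Gamma> M)
  note b = sub_binder[OF lc(3,4), of PCo]
  show ?case using lc(2)[OF b(1,2)] b(3) by (auto intro: typ_ind.lc)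
next
  case (mi \<Gamma> \<Delta> M)
  note s = sub_mi[OF mi(1,4,5)]
  have "typ_ind (\<lambda>\<Gamma> M. Xsub \<Gamma> M \<or> typable \<Gamma> M) (merge (del k \<Delta>) (miimg G)) (substs k P M)"
    using mi(3) s by blast
  then show ?case using s by (auto intro: typ_ind.mi)
next
  case (mc \<Gamma> \<Delta> M)
  note s = sub_mc[OF mc(1,3,4)]
  have "Xsub (merge (del k \<Delta>) (mcimg G)) (substs k P M)"
    unfolding Xsub_def using mc(2) s by blast
  then show ?case using s by (auto intro: typ_ind.mc)
qed

lemma typable_sub: "typable \<Gamma> M \<Longrightarrow> argok (\<Gamma> k) G P \<Longrightarrow> compat (del k \<Gamma>) G \<Longrightarrow>
   typable (merge (del k \<Gamma>) G) (substs k P M)"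
proof -
  assume "typable \<Gamma> M" "argok (\<Gamma> k) G P" "compat (del k \<Gamma>) G"
  then have "Xsub (merge (del k \<Gamma>) G) (substs k P M)" unfolding Xsub_def by blast
  then show ?thesis
  proof (rule typable.coinduct)
    fix \<Gamma>' M' assume "Xsub \<Gamma>' M'"
    then obtain \<Gamma> M k P G where "typable \<Gamma> M" "argok (\<Gamma> k) G P" "compat (del k \<Gamma>) G"
      "\<Gamma>' = merge (del k \<Gamma>) G" "M' = substs k P M"
      unfolding Xsub_def by blast
    then show "\<exists>\<Gamma> M. \<Gamma>' = \<Gamma> \<and> M' = M \<and> typ_ind (\<lambda>\<Gamma> M. Xsub \<Gamma> M \<or> typable \<Gamma> M) \<Gamma> M"
      using sub_ind typable_iff by blast
  qed
qed



lemma inv_App: "typable \<Gamma> (App M N) \<Longrightarrow> \<exists>\<Gamma>1 \<Gamma>2. app_split \<Gamma> \<Gamma>1 \<Gamma>2 \<and> typable \<Gamma>1 M \<and> typable \<Gamma>2 N"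
  by (subst (asm) typable_iff) (erule typ_ind.cases; auto simp: typable_iff)
lemma inv_Lam: "typable \<Gamma> (Lam M) \<Longrightarrow> typable (ext PLin \<Gamma>) M"
  by (subst (asm) typable_iff) (erule typ_ind.cases; auto simp: typable_iff)
lemma inv_LamI: "typable \<Gamma> (LamI M) \<Longrightarrow> typable (ext PSharp \<Gamma>) M \<or> typable (ext PInd \<Gamma>) M"
  by (subst (asm) typable_iff) (erule typ_ind.cases; auto simp: typable_iff)
lemma inv_LamC: "typable \<Gamma> (LamC M) \<Longrightarrow> typable (ext PCo \<Gamma>) M"
  by (subst (asm) typable_iff) (erule typ_ind.cases; auto simp: typable_iff)
lemma inv_BoxI: "typable \<Gamma> (BoxI M) \<Longrightarrow> mi_env \<Gamma> (miimg \<Gamma>) \<and> typable (miimg \<Gamma>) M"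
  using typable_BoxI_inv .
lemma inv_BoxC: "typable \<Gamma> (BoxC M) \<Longrightarrow> mc_env \<Gamma> (mcimg \<Gamma>) \<and> typable (mcimg \<Gamma>) M"
  using typable_BoxC_inv .

lemma intro_App: "app_split \<Gamma> \<Gamma>1 \<Gamma>2 \<Longrightarrow> typable \<Gamma>1 M \<Longrightarrow> typable \<Gamma>2 N \<Longrightarrow> typable \<Gamma> (App M N)"
  by (auto simp: typable_iff intro: typ_ind.a)
lemma intro_Lam: "typable (ext PLin \<Gamma>) M \<Longrightarrow> typable \<Gamma> (Lam M)"
  by (auto simp: typable_iff intro: typ_ind.ll)
lemma intro_LamI1: "typable (ext PSharp \<Gamma>) M \<Longrightarrow> typable \<Gamma> (LamI M)"
  by (auto simp: typable_iff intro: typ_ind.li1)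
lemma intro_LamI2: "typable (ext PInd \<Gamma>) M \<Longrightarrow> typable \<Gamma> (LamI M)"
  by (auto simp: typable_iff intro: typ_ind.li2)
lemma intro_LamC: "typable (ext PCo \<Gamma>) M \<Longrightarrow> typable \<Gamma> (LamC M)"
  by (auto simp: typable_iff intro: typ_ind.lc)
lemma intro_BoxI: "mi_env \<Gamma> \<Delta> \<Longrightarrow> typable \<Delta> M \<Longrightarrow> typable \<Gamma> (BoxI M)"
  by (auto simp: typable_iff[of \<Gamma>] intro: typ_ind.mi simp: typable_iff)
lemma intro_BoxC: "mc_env \<Gamma> \<Delta> \<Longrightarrow> typable \<Delta> M \<Longrightarrow> typable \<Gamma> (BoxC M)"
  by (rule typable_BoxC_intro)

definition ind2sh :: "env \<Rightarrow> env \<Rightarrow> bool" where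
  "ind2sh \<Gamma> \<Gamma>' \<longleftrightarrow> (\<forall>i. \<Gamma>' i = \<Gamma> i \<or> (\<Gamma> i = Some PInd \<and> \<Gamma>' i = Some PSharp))"

lemma ind2sh_refl: "ind2sh \<Gamma> \<Gamma>" by (simp add: ind2sh_def)

lemma ind2sh_noInd: "(\<forall>i. \<Delta> i \<noteq> Some PInd) \<Longrightarrow> ind2sh \<Delta> \<Delta>' \<Longrightarrow> \<Delta>' = \<Delta>"
  unfolding ind2sh_def fun_eq_iff by metis

lemma miimg_noInd: "\<forall>i. miimg \<Gamma> i \<noteq> Some PInd"
proof fix i show "miimg \<Gamma> i \<noteq> Some PInd" using opt_pat_cases[of "\<Gamma> i"] by (elim disjE; simp add: miimg_1) qed
lemma mcimg_noInd: "shared_only \<Gamma> \<Longrightarrow> \<forall>i. mcimg \<Gamma> i \<noteq> Some PInd"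
proof fix i assume sh: "shared_only \<Gamma>"
  show "mcimg \<Gamma> i \<noteq> Some PInd" using shared_only_i[OF sh, of i] by (elim disjE; simp add: mcimg_1) qed

lemma ind2sh_ext:
  assumes "ind2sh (ext p \<Gamma>) \<Gamma>''"
  shows "\<exists>p' \<Gamma>'. \<Gamma>'' = ext p' \<Gamma>' \<and> ind2sh \<Gamma> \<Gamma>' \<and> (p' = p \<or> (p = PInd \<and> p' = PSharp))"
proof -
  have 0: "\<Gamma>'' 0 = Some p \<or> (p = PInd \<and> \<Gamma>'' 0 = Some PSharp)"
    using assms unfolding ind2sh_def by (metis ext_apply option.inject)
  then obtain p' where p': "\<Gamma>'' 0 = Some p'" "p' = p \<or> (p = PInd \<and> p' = PSharp)" by blast
  have "\<Gamma>'' = ext p' (\<lambda>i. \<Gamma>'' (Suc i))" using p'(1) by (auto simp: fun_eq_iff ext_apply)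
  moreover have "ind2sh \<Gamma> (\<lambda>i. \<Gamma>'' (Suc i))" using assms unfolding ind2sh_def
  proof (intro allI)
    fix i assume "\<forall>i. \<Gamma>'' i = ext p \<Gamma> i \<or> ext p \<Gamma> i = Some PInd \<and> \<Gamma>'' i = Some PSharp"
    then show "\<Gamma>'' (Suc i) = \<Gamma> i \<or> \<Gamma> i = Some PInd \<and> \<Gamma>'' (Suc i) = Some PSharp"
      by (metis ext_Suc)
  qed
  ultimately show ?thesis using p'(2) by blast
qed

lemma app_split_sym: "app_split \<Gamma> \<Gamma>1 \<Gamma>2 \<Longrightarrow> app_split \<Gamma> \<Gamma>2 \<Gamma>1"
  unfolding app_split_def by blast

lemma ind2sh_app:
  assumes sp: "app_split \<Gamma> \<Gamma>1 \<Gamma>2" and i: "ind2sh \<Gamma>1 \<Gamma>1'"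
  shows "\<exists>\<Gamma>' \<Gamma>2'. app_split \<Gamma>' \<Gamma>1' \<Gamma>2' \<and> weak \<Gamma>2 \<Gamma>2' \<and> ind2sh \<Gamma> \<Gamma>'"
proof -
  define G where "G = (\<lambda>i. if \<Gamma>1' i \<noteq> \<Gamma>1 i then \<Gamma>1' i else \<Gamma> i)"
  define G2 where "G2 = (\<lambda>i. if \<Gamma>1' i \<noteq> \<Gamma>1 i then Some PSharp else \<Gamma>2 i)"
  have per: "split3 (G i) (\<Gamma>1' i) (G2 i) \<and>
     (G2 i = \<Gamma>2 i \<or> (\<Gamma>2 i = None \<and> (\<exists>p. G2 i = Some p \<and> shp p)) \<or> (\<Gamma>2 i = Some PLin \<and> G2 i = Some PSharp))
     \<and> (G i = \<Gamma> i \<or> (\<Gamma> i = Some PInd \<and> G i = Some PSharp))" for i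
  proof (cases "\<Gamma>1' i = \<Gamma>1 i")
    case True
    then show ?thesis using sp unfolding G_def G2_def app_split_split3 by auto
  next
    case False
    then have h: "\<Gamma>1 i = Some PInd" "\<Gamma>1' i = Some PSharp" using i unfolding ind2sh_def by auto
    have s3: "split3 (\<Gamma> i) (\<Gamma>1 i) (\<Gamma>2 i)" using sp unfolding app_split_split3 by blast
    then have "\<Gamma> i = Some PInd" "\<Gamma>2 i = None" using h(1) unfolding split3_def
      by (cases "\<Gamma> i"; auto)+
    then show ?thesis using False h unfolding G_def G2_def split3_def by auto
  qed
  have "app_split G \<Gamma>1' G2" unfolding app_split_split3 using per by blast
  moreover have "weak \<Gamma>2 G2" unfolding weak_def using per by blast
  moreover have "ind2sh \<Gamma> G" unfolding ind2sh_def using per by blast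
  ultimately show ?thesis by blast
qed

definition l2s :: "env \<Rightarrow> env" where
  "l2s G = (\<lambda>i. case G i of Some PLin \<Rightarrow> Some PSharp | x \<Rightarrow> x)"

lemma del0_ext: "del 0 (ext p \<Gamma>) = \<Gamma>"
  by (simp add: fun_eq_iff del_apply ext_apply)

lemma app_split_merge: "app_split \<Gamma> \<Gamma>1 \<Gamma>2 \<Longrightarrow> compat \<Gamma>1 \<Gamma>2 \<and> merge \<Gamma>1 \<Gamma>2 = \<Gamma>"
proof -
  assume sp: "app_split \<Gamma> \<Gamma>1 \<Gamma>2"
  have s: "split3 (\<Gamma> i) (\<Gamma>1 i) (\<Gamma>2 i)" for i using sp app_split_split3 by blast
  have "(\<forall>p q. \<Gamma>1 i = Some p \<longrightarrow> \<Gamma>2 i = Some q \<longrightarrow> p = q \<and> shp p) \<and> merge \<Gamma>1 \<Gamma>2 i = \<Gamma> i" for i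
    using s[of i] unfolding split3_def merge_apply by (cases "\<Gamma> i"; cases "\<Gamma>1 i"; auto)
  then show ?thesis unfolding compat_def fun_eq_iff by blast
qed



lemma beta_sharp:
  assumes sp: "app_split \<Gamma> \<Gamma>1 \<Gamma>2" and tM: "typable (ext PSharp \<Gamma>1) M" and tN: "typable \<Gamma>2 (BoxI N)"
  shows "\<exists>\<Gamma>'. ind2sh \<Gamma> \<Gamma>' \<and> typable \<Gamma>' (subst0 M N)"
proof -
  define D where "D = miimg \<Gamma>2"
  define G where "G = l2s D"
  have mi: "mi_env \<Gamma>2 D" and tD: "typable D N" using inv_BoxI[OF tN] unfolding D_def by auto
  have nl: "\<forall>i. \<Gamma>2 i \<noteq> Some PLin" using mi unfolding mi_env_iff by blast
  have s: "split3 (\<Gamma> i) (\<Gamma>1 i) (\<Gamma>2 i)" for i using sp app_split_split3 by blast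
  have Gi: "G i = (case mi1 (\<Gamma>2 i) of Some PLin \<Rightarrow> Some PSharp | x \<Rightarrow> x)" for i
    unfolding G_def l2s_def D_def miimg_1 ..
  have per: "(\<Gamma>2 i = None \<and> G i = None) \<or> (\<Gamma>2 i = Some PInd \<and> G i = Some PSharp)
     \<or> (\<Gamma>2 i = Some PSharp \<and> G i = None) \<or> (\<Gamma>2 i = Some PCo \<and> G i = Some PCo)
     \<or> (\<Gamma>2 i = Some PDag \<and> G i = Some PDag)" for i
    using opt_pat_cases[of "\<Gamma>2 i"] nl[rule_format, of i] unfolding Gi by (elim disjE; simp)
  have wk: "weak D G" unfolding weak_def G_def l2s_def
  proof
    fix i show "(case D i of Some PLin \<Rightarrow> Some PSharp | x \<Rightarrow> x) = D i \<or>
         D i = None \<and> (\<exists>p. (case D i of Some PLin \<Rightarrow> Some PSharp | x \<Rightarrow> x) = Some p \<and> shp p) \<or>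
         D i = Some PLin \<and> (case D i of Some PLin \<Rightarrow> Some PSharp | x \<Rightarrow> x) = Some PSharp"
      using opt_pat_cases[of "D i"] by (elim disjE; simp)
  qed
  have tG: "typable G N" using typable_weak[OF tD wk] .
  have shG: "shared_only G"
  proof (rule shared_only_I)
    fix i show "G i = None \<or> G i = Some PSharp \<or> G i = Some PCo \<or> G i = Some PDag"
      using per[of i] by auto
  qed
  have per2: "(\<forall>p q. \<Gamma>1 i = Some p \<longrightarrow> G i = Some q \<longrightarrow> p = q \<and> shp p)
     \<and> (merge \<Gamma>1 G i = \<Gamma> i \<or> (\<Gamma> i = Some PInd \<and> merge \<Gamma>1 G i = Some PSharp))" for i
    using per[of i] s[of i] unfolding merge_apply split3_def
    by (elim disjE; cases "\<Gamma> i"; auto)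
  have c: "compat \<Gamma>1 G" unfolding compat_def using per2 by blast
  have i2: "ind2sh \<Gamma> (merge \<Gamma>1 G)" unfolding ind2sh_def using per2 by blast
  have "typable (merge (del 0 (ext PSharp \<Gamma>1)) G) (substs 0 N M)"
    by (rule typable_sub[OF tM]) (simp_all add: ext_apply del0_ext shG tG c)
  then show ?thesis using i2 by (auto simp: del0_ext subst0_def)
qed

lemma subj: "red n M M' \<Longrightarrow> typable \<Gamma> M \<Longrightarrow> \<exists>\<Gamma>'. ind2sh \<Gamma> \<Gamma>' \<and> typable \<Gamma>' M'"
proof (induction arbitrary: \<Gamma> rule: red.induct)
  case (beta_lin M N)
  obtain \<Gamma>1 \<Gamma>2 where sp: "app_split \<Gamma> \<Gamma>1 \<Gamma>2" and t1: "typable \<Gamma>1 (Lam M)" and t2: "typable \<Gamma>2 N"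
    using inv_App[OF beta_lin] by blast
  have tM: "typable (ext PLin \<Gamma>1) M" using inv_Lam[OF t1] .
  have cm: "compat \<Gamma>1 \<Gamma>2" "merge \<Gamma>1 \<Gamma>2 = \<Gamma>" using app_split_merge[OF sp] by auto
  have "typable (merge (del 0 (ext PLin \<Gamma>1)) \<Gamma>2) (substs 0 N M)"
    by (rule typable_sub[OF tM]) (simp_all add: ext_apply del0_ext t2 cm)
  then show ?case using cm ind2sh_refl by (auto simp: del0_ext subst0_def)
next
  case (beta_ind M N)
  obtain \<Gamma>1 \<Gamma>2 where sp: "app_split \<Gamma> \<Gamma>1 \<Gamma>2" and t1: "typable \<Gamma>1 (LamI M)" and t2: "typable \<Gamma>2 (BoxI N)"
    using inv_App[OF beta_ind] by blast
  have cm: "compat \<Gamma>1 \<Gamma>2" "merge \<Gamma>1 \<Gamma>2 = \<Gamma>" using app_split_merge[OF sp] by auto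
  from inv_LamI[OF t1] show ?case
  proof
    assume "typable (ext PSharp \<Gamma>1) M" then show ?thesis using beta_sharp sp t2 by blast
  next
    assume tM: "typable (ext PInd \<Gamma>1) M"
    have "typable (merge (del 0 (ext PInd \<Gamma>1)) \<Gamma>2) (substs 0 N M)"
      by (rule typable_sub[OF tM]) (simp_all add: ext_apply del0_ext t2 cm)
    then show ?thesis using cm ind2sh_refl by (auto simp: del0_ext subst0_def)
  qed
next
  case (beta_coind M N)
  obtain \<Gamma>1 \<Gamma>2 where sp: "app_split \<Gamma> \<Gamma>1 \<Gamma>2" and t1: "typable \<Gamma>1 (LamC M)" and t2: "typable \<Gamma>2 (BoxC N)"
    using inv_App[OF beta_coind] by blast
  have cm: "compat \<Gamma>1 \<Gamma>2" "merge \<Gamma>1 \<Gamma>2 = \<Gamma>" using app_split_merge[OF sp] by auto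
  have sh: "shared_only \<Gamma>2" using inv_BoxC[OF t2] unfolding mc_env_iff by blast
  have tM: "typable (ext PCo \<Gamma>1) M" using inv_LamC[OF t1] .
  have "typable (merge (del 0 (ext PCo \<Gamma>1)) \<Gamma>2) (substs 0 N M)"
    by (rule typable_sub[OF tM]) (simp_all add: ext_apply del0_ext t2 cm sh)
  then show ?case using cm ind2sh_refl by (auto simp: del0_ext subst0_def)
next
  case (app_l n M M' N)
  obtain \<Gamma>1 \<Gamma>2 where sp: "app_split \<Gamma> \<Gamma>1 \<Gamma>2" and t1: "typable \<Gamma>1 M" and t2: "typable \<Gamma>2 N"
    using inv_App[OF app_l.prems] by blast
  obtain \<Gamma>1' where i1: "ind2sh \<Gamma>1 \<Gamma>1'" and t1': "typable \<Gamma>1' M'" using app_l.IH[OF t1] by blast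
  obtain \<Gamma>' \<Gamma>2' where "app_split \<Gamma>' \<Gamma>1' \<Gamma>2'" "weak \<Gamma>2 \<Gamma>2'" "ind2sh \<Gamma> \<Gamma>'"
    using ind2sh_app[OF sp i1] by blast
  then show ?case using t1' typable_weak[OF t2] intro_App by blast
next
  case (app_r n N N' M)
  obtain \<Gamma>1 \<Gamma>2 where sp: "app_split \<Gamma> \<Gamma>1 \<Gamma>2" and t1: "typable \<Gamma>1 M" and t2: "typable \<Gamma>2 N"
    using inv_App[OF app_r.prems] by blast
  obtain \<Gamma>2' where i2: "ind2sh \<Gamma>2 \<Gamma>2'" and t2': "typable \<Gamma>2' N'" using app_r.IH[OF t2] by blast
  obtain \<Gamma>' \<Gamma>1' where "app_split \<Gamma>' \<Gamma>2' \<Gamma>1'" "weak \<Gamma>1 \<Gamma>1'" "ind2sh \<Gamma> \<Gamma>'"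
    using ind2sh_app[OF app_split_sym[OF sp] i2] by blast
  then show ?case using t2' typable_weak[OF t1] intro_App app_split_sym by blast
next
  case (lam n M M')
  obtain \<Gamma>'' where "ind2sh (ext PLin \<Gamma>) \<Gamma>''" "typable \<Gamma>'' M'" using lam.IH[OF inv_Lam[OF lam.prems]] by blast
  then show ?case using ind2sh_ext intro_Lam by (metis pat.distinct)
next
  case (lamI n M M')
  from inv_LamI[OF lamI.prems] show ?case
  proof
    assume "typable (ext PSharp \<Gamma>) M"
    then obtain \<Gamma>'' where "ind2sh (ext PSharp \<Gamma>) \<Gamma>''" "typable \<Gamma>'' M'" using lamI.IH by blast
    then show ?case using ind2sh_ext intro_LamI1 by (metis pat.distinct)
  next
    assume "typable (ext PInd \<Gamma>) M"
    then obtain \<Gamma>'' where "ind2sh (ext PInd \<Gamma>) \<Gamma>''" "typable \<Gamma>'' M'" using lamI.IH by blast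
    then show ?case using ind2sh_ext intro_LamI1 intro_LamI2 by metis
  qed
next
  case (lamC n M M')
  obtain \<Gamma>'' where "ind2sh (ext PCo \<Gamma>) \<Gamma>''" "typable \<Gamma>'' M'" using lamC.IH[OF inv_LamC[OF lamC.prems]] by blast
  then show ?case using ind2sh_ext intro_LamC by (metis pat.distinct)
next
  case (boxI n M M')
  have m: "mi_env \<Gamma> (miimg \<Gamma>)" "typable (miimg \<Gamma>) M" using inv_BoxI[OF boxI.prems] by auto
  obtain \<Delta>' where "ind2sh (miimg \<Gamma>) \<Delta>'" "typable \<Delta>' M'" using boxI.IH[OF m(2)] by blast
  then have "typable (miimg \<Gamma>) M'" using ind2sh_noInd[OF miimg_noInd] by metis
  then show ?case using intro_BoxI[OF m(1)] ind2sh_refl by blast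
next
  case (boxC n M M')
  have m: "mc_env \<Gamma> (mcimg \<Gamma>)" "typable (mcimg \<Gamma>) M" using inv_BoxC[OF boxC.prems] by auto
  have sh: "shared_only \<Gamma>" using m(1) unfolding mc_env_iff by blast
  obtain \<Delta>' where "ind2sh (mcimg \<Gamma>) \<Delta>'" "typable \<Delta>' M'" using boxC.IH[OF m(2)] by blast
  then have "typable (mcimg \<Gamma>) M'" using ind2sh_noInd[OF mcimg_noInd[OF sh]] by metis
  then show ?case using intro_BoxC[OF m(1)] ind2sh_refl by blast
qed



definition nd :: "nat \<Rightarrow> nat \<Rightarrow> nat multiset" where
  "nd n d = (if n = 0 then {#d#} else {#})"

inductive msr :: "nat \<Rightarrow> nat \<Rightarrow> trm \<Rightarrow> nat multiset \<Rightarrow> bool" where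
  mVar: "msr n d (Var i) (nd n d)"
| mApp: "msr n d a A \<Longrightarrow> msr n d b B \<Longrightarrow> msr n d (App a b) (nd n d + A + B)"
| mLam: "msr n d a A \<Longrightarrow> msr n d (Lam a) (nd n d + A)"
| mLamI: "msr n d a A \<Longrightarrow> msr n d (LamI a) (nd n d + A)"
| mLamC: "msr n d a A \<Longrightarrow> msr n d (LamC a) (nd n d + A)"
| mBoxI: "msr n (Suc d) a A \<Longrightarrow> msr n d (BoxI a) (nd n d + A)"
| mBoxC0: "msr 0 d (BoxC a) {#d#}"
| mBoxCS: "msr n d a A \<Longrightarrow> msr (Suc n) d (BoxC a) A"

inductive_cases msr_VarE: "msr n d (Var i) X"
inductive_cases msr_AppE: "msr n d (App a b) X"
inductive_cases msr_LamE: "msr n d (Lam a) X"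
inductive_cases msr_LamIE: "msr n d (LamI a) X"
inductive_cases msr_LamCE: "msr n d (LamC a) X"
inductive_cases msr_BoxIE: "msr n d (BoxI a) X"
inductive_cases msr_BoxCE: "msr n d (BoxC a) X"

lemma msr_unique: "msr n d M A \<Longrightarrow> msr n d M B \<Longrightarrow> A = B"
proof (induction arbitrary: B rule: msr.induct)
  case (mVar n d i) from mVar.prems show ?case by (rule msr_VarE) simp
next
  case (mApp n d a A b B') from mApp.prems show ?case by (rule msr_AppE) (metis mApp.IH)
next
  case (mLam n d a A) from mLam.prems show ?case by (rule msr_LamE) (metis mLam.IH)
next
  case (mLamI n d a A) from mLamI.prems show ?case by (rule msr_LamIE) (metis mLamI.IH)
next
  case (mLamC n d a A) from mLamC.prems show ?case by (rule msr_LamCE) (metis mLamC.IH)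
next
  case (mBoxI n d a A) from mBoxI.prems show ?case by (rule msr_BoxIE) (metis mBoxI.IH)
next
  case (mBoxC0 d a) from mBoxC0.prems show ?case by (rule msr_BoxCE) simp_all
next
  case (mBoxCS n d a A) from mBoxCS.prems show ?case by (rule msr_BoxCE) (simp_all add: mBoxCS.IH)
qed

lemma msr_exists_ind:
  assumes IHn: "\<And>m \<Gamma> M d. n = Suc m \<Longrightarrow> typable \<Gamma> M \<Longrightarrow> \<exists>A. msr m d M A"
  shows "typ_ind typable \<Gamma> M \<Longrightarrow> \<exists>A. msr n d M A"
proof (induction arbitrary: d rule: typ_ind.induct)
  case (vl \<Gamma> x) then show ?case by (auto intro: mVar)
next
  case (vd \<Gamma> x) then show ?case by (auto intro: mVar)
next
  case (va \<Gamma> x) then show ?case by (auto intro: mVar)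
next
  case (a \<Gamma> \<Gamma>1 \<Gamma>2 M N) then show ?case by (meson mApp)
next
  case (ll \<Gamma> M) then show ?case by (meson mLam)
next
  case (li1 \<Gamma> M) then show ?case by (meson mLamI)
next
  case (li2 \<Gamma> M) then show ?case by (meson mLamI)
next
  case (lc \<Gamma> M) then show ?case by (meson mLamC)
next
  case (mi \<Gamma> \<Delta> M) then show ?case by (meson mBoxI)
next
  case (mc \<Gamma> \<Delta> M)
  show ?case
  proof (cases n)
    case 0 then show ?thesis by (auto intro: mBoxC0)
  next
    case (Suc m) then show ?thesis using IHn[OF Suc mc(2)] by (meson mBoxCS)
  qed
qed

lemma msr_exists: "typable \<Gamma> M \<Longrightarrow> \<exists>A. msr n d M A"
proof (induction n arbitrary: \<Gamma> M d)
  case 0 then show ?case using msr_exists_ind[of 0] typable_iff by blast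
next
  case (Suc n) then show ?case using msr_exists_ind[of "Suc n"] typable_iff by blast
qed

lemma nd_shift: "image_mset (\<lambda>x. x + e) (nd n d) = nd n (d + e)"
  by (simp add: nd_def)

lemma msr_shift: "msr n d M A \<Longrightarrow> msr n (d + e) M (image_mset (\<lambda>x. x + e) A)"
proof (induction rule: msr.induct)
  case (mVar n d i) then show ?case using msr.mVar[of n "d+e" i] by (simp add: nd_shift)
next
  case (mApp n d a A b B) then show ?case using msr.mApp[OF mApp.IH] by (simp add: nd_shift)
next
  case (mLam n d a A) then show ?case using msr.mLam[OF mLam.IH] by (simp add: nd_shift)
next
  case (mLamI n d a A) then show ?case using msr.mLamI[OF mLamI.IH] by (simp add: nd_shift)
next
  case (mLamC n d a A) then show ?case using msr.mLamC[OF mLamC.IH] by (simp add: nd_shift)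
next
  case (mBoxI n d a A) 
  have "msr n (Suc (d + e)) a (image_mset (\<lambda>x. x + e) A)" using mBoxI.IH by simp
  then show ?case using msr.mBoxI by (simp add: nd_shift)
next
  case (mBoxC0 d a) then show ?case using msr.mBoxC0[of "d+e"] by simp
next
  case (mBoxCS n d a A) then show ?case using msr.mBoxCS by simp
qed

lemma msr_lift: "msr n d M A \<Longrightarrow> msr n d (lift k M) A"
proof (induction arbitrary: k rule: msr.induct)
qed (auto intro: msr.intros)



inductive occ :: "nat \<Rightarrow> nat \<Rightarrow> trm \<Rightarrow> nat multiset \<Rightarrow> bool" where
  oVar: "occ k d (Var i) (if i = k then {#d#} else {#})"
| oApp: "occ k d a A \<Longrightarrow> occ k d b B \<Longrightarrow> occ k d (App a b) (A + B)"
| oLam: "occ (Suc k) d a A \<Longrightarrow> occ k d (Lam a) A"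
| oLamI: "occ (Suc k) d a A \<Longrightarrow> occ k d (LamI a) A"
| oLamC: "occ (Suc k) d a A \<Longrightarrow> occ k d (LamC a) A"
| oBoxI: "occ k (Suc d) a A \<Longrightarrow> occ k d (BoxI a) A"
| oBoxC: "occ k d (BoxC a) {#}"

inductive_cases occ_VarE: "occ k d (Var i) Q"
inductive_cases occ_AppE: "occ k d (App a b) Q"
inductive_cases occ_LamE: "occ k d (Lam a) Q"
inductive_cases occ_LamIE: "occ k d (LamI a) Q"
inductive_cases occ_LamCE: "occ k d (LamC a) Q"
inductive_cases occ_BoxIE: "occ k d (BoxI a) Q"
inductive_cases occ_BoxCE: "occ k d (BoxC a) Q"

lemma subst_formula:
  "msr n d M X \<Longrightarrow> n = 0 \<Longrightarrow> occ k d M Q \<Longrightarrow> (\<forall>e. msr 0 e P (SP e)) \<Longrightarrow>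
   \<exists>Y. X = Y + Q \<and> msr 0 d (substs k P M) (Y + sum_mset (image_mset SP Q))"
proof (induction arbitrary: k P Q rule: msr.induct)
  case (mVar n d i)
  from mVar.prems(2) have o: "Q = (if i = k then {#d#} else {#})" by (rule occ_VarE) simp
  show ?case
  proof (cases "i = k")
    case True
    then show ?thesis using o mVar.prems by (auto simp: nd_def substs_var)
  next
    case False
    have "msr 0 d (substs k P (Var i)) {#d#}" 
      using msr.mVar[of 0 d] False by (simp add: substs_var nd_def)
    then show ?thesis using o False mVar.prems by (auto simp: nd_def)
  qed
next
  case (mApp n d a A b B)
  from mApp.prems(2) obtain OA OB where o: "Q = OA + OB" "occ k d a OA" "occ k d b OB"
    by (rule occ_AppE) blast
  obtain YA where ya: "A = YA + OA" "msr 0 d (substs k P a) (YA + sum_mset (image_mset SP OA))"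
    using mApp.IH(1)[OF mApp.prems(1) o(2) mApp.prems(3)] by blast
  obtain YB where yb: "B = YB + OB" "msr 0 d (substs k P b) (YB + sum_mset (image_mset SP OB))"
    using mApp.IH(2)[OF mApp.prems(1) o(3) mApp.prems(3)] by blast
  have "msr 0 d (substs k P (App a b)) (nd 0 d + (YA + sum_mset (image_mset SP OA)) + (YB + sum_mset (image_mset SP OB)))"
    using msr.mApp[OF ya(2) yb(2)] by simp
  then show ?case using ya(1) yb(1) o(1) mApp.prems(1)
    by (intro exI[of _ "nd n d + YA + YB"]) (simp add: ac_simps)
next
  case (mLam n d a A)
  from mLam.prems(2) have o: "occ (Suc k) d a Q" by (rule occ_LamE) blast
  have "\<forall>e. msr 0 e (lift 0 P) (SP e)" using mLam.prems(3) msr_lift by blast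
  then obtain Y where "A = Y + Q" "msr 0 d (substs (Suc k) (lift 0 P) a) (Y + sum_mset (image_mset SP Q))"
    using mLam.IH[OF mLam.prems(1) o] by blast
  then show ?case using msr.mLam[of 0 d "substs (Suc k) (lift 0 P) a" "Y + sum_mset (image_mset SP Q)"] mLam.prems(1)
    by (intro exI[of _ "nd n d + Y"]) (simp add: ac_simps)
next
  case (mLamI n d a A)
  from mLamI.prems(2) have o: "occ (Suc k) d a Q" by (rule occ_LamIE) blast
  have "\<forall>e. msr 0 e (lift 0 P) (SP e)" using mLamI.prems(3) msr_lift by blast
  then obtain Y where "A = Y + Q" "msr 0 d (substs (Suc k) (lift 0 P) a) (Y + sum_mset (image_mset SP Q))"
    using mLamI.IH[OF mLamI.prems(1) o] by blast
  then show ?case using msr.mLamI[of 0 d "substs (Suc k) (lift 0 P) a" "Y + sum_mset (image_mset SP Q)"] mLamI.prems(1)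
    by (intro exI[of _ "nd n d + Y"]) (simp add: ac_simps)
next
  case (mLamC n d a A)
  from mLamC.prems(2) have o: "occ (Suc k) d a Q" by (rule occ_LamCE) blast
  have "\<forall>e. msr 0 e (lift 0 P) (SP e)" using mLamC.prems(3) msr_lift by blast
  then obtain Y where "A = Y + Q" "msr 0 d (substs (Suc k) (lift 0 P) a) (Y + sum_mset (image_mset SP Q))"
    using mLamC.IH[OF mLamC.prems(1) o] by blast
  then show ?case using msr.mLamC[of 0 d "substs (Suc k) (lift 0 P) a" "Y + sum_mset (image_mset SP Q)"] mLamC.prems(1)
    by (intro exI[of _ "nd n d + Y"]) (simp add: ac_simps)
next
  case (mBoxI n d a A)
  from mBoxI.prems(2) have o: "occ k (Suc d) a Q" by (rule occ_BoxIE) blast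
  obtain Y where "A = Y + Q" "msr 0 (Suc d) (substs k P a) (Y + sum_mset (image_mset SP Q))"
    using mBoxI.IH[OF mBoxI.prems(1) o mBoxI.prems(3)] by blast
  then show ?case using msr.mBoxI[of 0 d "substs k P a" "Y + sum_mset (image_mset SP Q)"] mBoxI.prems(1)
    by (intro exI[of _ "nd n d + Y"]) (simp add: ac_simps)
next
  case (mBoxC0 d a)
  from mBoxC0.prems(2) have "Q = {#}" by (rule occ_BoxCE) blast
  then show ?case using msr.mBoxC0 by simp
next
  case (mBoxCS n d a A) then show ?case by simp
qed

fun occP :: "pat option \<Rightarrow> nat \<Rightarrow> nat multiset \<Rightarrow> bool" where
  "occP None d Q = (Q = {#})"
| "occP (Some PLin) d Q = (Q = {#d#})"
| "occP (Some PSharp) d Q = (set_mset Q \<subseteq> {d})"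
| "occP (Some PInd) d Q = (Q = {#Suc d#})"
| "occP (Some PCo) d Q = (Q = {#})"
| "occP (Some PDag) d Q = True"

lemma occP_app: "split3 a a1 a2 \<Longrightarrow> occP a1 d O1 \<Longrightarrow> occP a2 d O2 \<Longrightarrow> occP a d (O1 + O2)"
proof -
  assume s: "split3 a a1 a2" and o1: "occP a1 d O1" and o2: "occP a2 d O2"
  have N: "a = None \<Longrightarrow> a1 = None \<and> a2 = None" using s unfolding split3_def by blast
  have S: "a = Some p \<Longrightarrow> shp p \<Longrightarrow> a1 = Some p \<and> a2 = Some p" for p using s unfolding split3_def by blast
  have L: "a = Some p \<Longrightarrow> \<not> shp p \<Longrightarrow> (a1 = Some p \<and> a2 = None) \<or> (a1 = None \<and> a2 = Some p)" for p
    using s unfolding split3_def by blast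
  from opt_pat_cases[of a] show ?thesis
  proof (elim disjE)
    assume h: "a = None" then show ?thesis using N o1 o2 by simp
  next
    assume h: "a = Some PLin" then show ?thesis using L[OF h, simplified] o1 o2 by (elim disjE) simp_all
  next
    assume h: "a = Some PInd" then show ?thesis using L[OF h, simplified] o1 o2 by (elim disjE) simp_all
  next
    assume h: "a = Some PSharp" then show ?thesis using S[OF h] o1 o2 by simp
  next
    assume h: "a = Some PCo" then show ?thesis using S[OF h] o1 o2 by simp
  next
    assume h: "a = Some PDag" then show ?thesis by simp
  qed
qed

lemma occP_mi: "a \<noteq> Some PLin \<Longrightarrow> occP (mi1 a) (Suc d) Q \<Longrightarrow> occP a d Q"
  using opt_pat_cases[of a] by (elim disjE; simp)

lemma occP_empty: "a \<noteq> Some PLin \<Longrightarrow> a \<noteq> Some PInd \<Longrightarrow> occP a d {#}"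
  using opt_pat_cases[of a] by (elim disjE; simp)

lemma occ_typ: "typ_ind typable \<Gamma> M \<Longrightarrow> \<exists>Q. occ k d M Q \<and> occP (\<Gamma> k) d Q"
proof (induction arbitrary: k d rule: typ_ind.induct)
  case (vl \<Gamma> x)
  show ?case
  proof (cases "x = k")
    case True then show ?thesis using occ.oVar[of k d k] vl.hyps by auto
  next
    case False
    then have "(\<Gamma>(x := None)) k = \<Gamma> k" by simp
    then have "\<Gamma> k \<noteq> Some PLin" "\<Gamma> k \<noteq> Some PInd" using shared_only_i[OF vl.hyps(2), of k] by auto
    then show ?thesis using occ.oVar[of k d x] False occP_empty by auto
  qed
next
  case (vd \<Gamma> x)
  show ?case
  proof (cases "x = k")
    case True then show ?thesis using occ.oVar[of k d k] vd.hyps by auto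
  next
    case False
    then have "(\<Gamma>(x := None)) k = \<Gamma> k" by simp
    then have "\<Gamma> k \<noteq> Some PLin" "\<Gamma> k \<noteq> Some PInd" using shared_only_i[OF vd.hyps(2), of k] by auto
    then show ?thesis using occ.oVar[of k d x] False occP_empty by auto
  qed
next
  case (va \<Gamma> x)
  show ?case
  proof (cases "x = k")
    case True then show ?thesis using occ.oVar[of k d k] va.hyps by auto
  next
    case False
    then have "(\<Gamma>(x := None)) k = \<Gamma> k" by simp
    then have "\<Gamma> k \<noteq> Some PLin" "\<Gamma> k \<noteq> Some PInd" using shared_only_i[OF va.hyps(2), of k] by auto
    then show ?thesis using occ.oVar[of k d x] False occP_empty by auto
  qed
next
  case (a \<Gamma> \<Gamma>1 \<Gamma>2 M N)
  obtain O1 O2 where "occ k d M O1" "occP (\<Gamma>1 k) d O1" "occ k d N O2" "occP (\<Gamma>2 k) d O2"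
    using a.IH by blast
  moreover have "split3 (\<Gamma> k) (\<Gamma>1 k) (\<Gamma>2 k)" using a.hyps(1) app_split_split3 by blast
  ultimately show ?case using occ.oApp occP_app by blast
next
  case (ll \<Gamma> M)
  obtain Q where q: "occ (Suc k) d M Q" "occP (ext PLin \<Gamma> (Suc k)) d Q" using ll.IH by blast
  then show ?case using occ.oLam[OF q(1)] by auto
next
  case (li1 \<Gamma> M)
  obtain Q where q: "occ (Suc k) d M Q" "occP (ext PSharp \<Gamma> (Suc k)) d Q" using li1.IH by blast
  then show ?case using occ.oLamI[OF q(1)] by auto
next
  case (li2 \<Gamma> M)
  obtain Q where q: "occ (Suc k) d M Q" "occP (ext PInd \<Gamma> (Suc k)) d Q" using li2.IH by blast
  then show ?case using occ.oLamI[OF q(1)] by auto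
next
  case (lc \<Gamma> M)
  obtain Q where q: "occ (Suc k) d M Q" "occP (ext PCo \<Gamma> (Suc k)) d Q" using lc.IH by blast
  then show ?case using occ.oLamC[OF q(1)] by auto
next
  case (mi \<Gamma> \<Delta> M)
  have D: "\<Delta> = miimg \<Gamma>" "\<Gamma> k \<noteq> Some PLin" using mi.hyps(1) unfolding mi_env_iff by auto
  obtain Q where "occ k (Suc d) M Q" "occP (\<Delta> k) (Suc d) Q" using mi.IH by blast
  then have "occ k d (BoxI M) Q" "occP (mi1 (\<Gamma> k)) (Suc d) Q" using occ.oBoxI D(1) miimg_1 by auto
  then show ?case using occP_mi[OF D(2)] by blast
next
  case (mc \<Gamma> \<Delta> M)
  have "shared_only \<Gamma>" using mc.hyps(1) unfolding mc_env_iff by blast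
  then have "\<Gamma> k \<noteq> Some PLin" "\<Gamma> k \<noteq> Some PInd" using shared_only_i[of \<Gamma> k] by auto
  then show ?case using occ.oBoxC occP_empty by blast
qed



lemma irrefl_lt: "irrefl_on A less_than" by (simp add: irrefl_on_def)

lemma mult_ctx: "(A, B) \<in> mult less_than \<Longrightarrow> (C + A + D, C + B + D) \<in> mult less_than"
proof -
  assume h: "(A, B) \<in> mult less_than"
  have "(A + (C + D), B + (C + D)) \<in> mult less_than"
    using mult_cancel[OF trans_less_than irrefl_lt] h by blast
  then show ?thesis by (simp add: ac_simps)
qed

lemma strict_sub: "J \<noteq> {#} \<Longrightarrow> (I, I + J) \<in> mult r"
  using one_step_implies_mult[of J "{#}" r I] by simp

lemma SP_msr: "msr 0 0 N N0 \<Longrightarrow> \<forall>e. msr 0 e N (image_mset (\<lambda>x. x + e) N0)"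
  using msr_shift[of 0 0 N N0] by simp

lemma msr_BoxC0E: "msr 0 d (BoxC a) X \<Longrightarrow> X = {#d#}"
  by (erule msr_BoxCE) simp_all
lemma msr_BoxCSE: "msr (Suc n) d (BoxC a) X \<Longrightarrow> msr n d a X"
  by (erule msr_BoxCE) simp_all

lemma dec: "red n M M' \<Longrightarrow> typable \<Gamma> M \<Longrightarrow> msr n d M X \<Longrightarrow> msr n d M' X' \<Longrightarrow> (X', X) \<in> mult less_than"
proof (induction arbitrary: \<Gamma> d X X' rule: red.induct)
  case (beta_lin M N)
  obtain \<Gamma>1 \<Gamma>2 where t1: "typable \<Gamma>1 (Lam M)" and t2: "typable \<Gamma>2 N"
    using inv_App[OF beta_lin.prems(1)] by blast
  have tM: "typ_ind typable (ext PLin \<Gamma>1) M" using inv_Lam[OF t1] typable_iff by blast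
  from beta_lin.prems(2) obtain XL XN where x: "X = nd 0 d + XL + XN" "msr 0 d (Lam M) XL" "msr 0 d N XN"
    by (rule msr_AppE) blast
  from x(2) obtain XM where xm: "XL = nd 0 d + XM" "msr 0 d M XM" by (rule msr_LamE) blast
  obtain Q where q: "occ 0 d M Q" "occP (ext PLin \<Gamma>1 0) d Q" using occ_typ[OF tM] by blast
  have qd: "Q = {#d#}" using q(2) by (simp add: ext_apply)
  obtain N0 where n0: "msr 0 0 N N0" using msr_exists[OF t2] by blast
  define SP where "SP = (\<lambda>e. image_mset (\<lambda>x. x + e) N0)"
  have sp: "\<forall>e. msr 0 e N (SP e)" unfolding SP_def using SP_msr[OF n0] .
  obtain Y where y: "XM = Y + Q" "msr 0 d (substs 0 N M) (Y + sum_mset (image_mset SP Q))"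
    using subst_formula[OF xm(2) refl q(1) sp] by blast
  have "X' = Y + SP d" using msr_unique[OF beta_lin.prems(3)[unfolded subst0_def] y(2)] qd by simp
  moreover have "XN = SP d" using msr_unique[OF x(3)] sp by blast
  ultimately have "X = X' + {#d, d, d#}" using x(1) xm(1) y(1) qd by (simp add: nd_def ac_simps)
  then show ?case using strict_sub[of "{#d, d, d#}" X'] by simp
next
  case (beta_ind M N)
  obtain \<Gamma>1 \<Gamma>2 where t1: "typable \<Gamma>1 (LamI M)" and t2: "typable \<Gamma>2 (BoxI N)"
    using inv_App[OF beta_ind.prems(1)] by blast
  from beta_ind.prems(2) obtain XL XB where x: "X = nd 0 d + XL + XB" "msr 0 d (LamI M) XL" "msr 0 d (BoxI N) XB"
    by (rule msr_AppE) blast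
  from x(2) obtain XM where xm: "XL = nd 0 d + XM" "msr 0 d M XM" by (rule msr_LamIE) blast
  from x(3) obtain XN where xn: "XB = nd 0 d + XN" "msr 0 (Suc d) N XN" by (rule msr_BoxIE) blast
  have tN: "typable (miimg \<Gamma>2) N" using inv_BoxI[OF t2] by blast
  obtain N0 where n0: "msr 0 0 N N0" using msr_exists[OF tN] by blast
  define SP where "SP = (\<lambda>e. image_mset (\<lambda>x. x + e) N0)"
  have sp: "\<forall>e. msr 0 e N (SP e)" unfolding SP_def using SP_msr[OF n0] .
  have xnsp: "XN = SP (Suc d)" using msr_unique[OF xn(2)] sp by blast
  from inv_LamI[OF t1] show ?case
  proof
    assume "typable (ext PSharp \<Gamma>1) M"
    then have tM: "typ_ind typable (ext PSharp \<Gamma>1) M" using typable_iff by blast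
    obtain Q where q: "occ 0 d M Q" "occP (ext PSharp \<Gamma>1 0) d Q" using occ_typ[OF tM] by blast
    have qd: "set_mset Q \<subseteq> {d}" using q(2) by (simp add: ext_apply)
    obtain Y where y: "XM = Y + Q" "msr 0 d (substs 0 N M) (Y + sum_mset (image_mset SP Q))"
      using subst_formula[OF xm(2) refl q(1) sp] by blast
    have x': "X' = Y + sum_mset (image_mset SP Q)" using msr_unique[OF beta_ind.prems(3)[unfolded subst0_def] y(2)] .
    define J where "J = {#d, d, d#} + Q + SP (Suc d)"
    have xJ: "X = Y + J" using x(1) xm(1) xn(1) y(1) xnsp unfolding J_def by (simp add: nd_def ac_simps)
    have "\<forall>k \<in> set_mset (sum_mset (image_mset SP Q)). \<exists>j \<in> set_mset J. (k, j) \<in> less_than"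
    proof
      fix k assume "k \<in> set_mset (sum_mset (image_mset SP Q))"
      then obtain e where e: "e \<in># Q" "k \<in># SP e" by auto
      then have "e = d" using qd by auto
      then obtain z where z: "z \<in># N0" "k = z + d" using e(2) unfolding SP_def by auto
      have "z + Suc d \<in># J" using z(1) unfolding J_def SP_def by auto
      then show "\<exists>j \<in> set_mset J. (k, j) \<in> less_than" using z(2) by auto
    qed
    moreover have "J \<noteq> {#}" unfolding J_def by simp
    ultimately show ?thesis using one_step_implies_mult[of J _ less_than Y] x' xJ by blast
  next
    assume "typable (ext PInd \<Gamma>1) M"
    then have tM: "typ_ind typable (ext PInd \<Gamma>1) M" using typable_iff by blast
    obtain Q where q: "occ 0 d M Q" "occP (ext PInd \<Gamma>1 0) d Q" using occ_typ[OF tM] by blast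
    have qd: "Q = {#Suc d#}" using q(2) by (simp add: ext_apply)
    obtain Y where y: "XM = Y + Q" "msr 0 d (substs 0 N M) (Y + sum_mset (image_mset SP Q))"
      using subst_formula[OF xm(2) refl q(1) sp] by blast
    have "X' = Y + SP (Suc d)" using msr_unique[OF beta_ind.prems(3)[unfolded subst0_def] y(2)] qd by simp
    then have "X = X' + {#d, d, d, Suc d#}" using x(1) xm(1) xn(1) y(1) xnsp qd by (simp add: nd_def ac_simps)
    then show ?thesis using strict_sub[of "{#d, d, d, Suc d#}" X'] by simp
  qed
next
  case (beta_coind M N)
  obtain \<Gamma>1 \<Gamma>2 where t1: "typable \<Gamma>1 (LamC M)" and t2: "typable \<Gamma>2 (BoxC N)"
    using inv_App[OF beta_coind.prems(1)] by blast
  have tM: "typ_ind typable (ext PCo \<Gamma>1) M" using inv_LamC[OF t1] typable_iff by blast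
  from beta_coind.prems(2) obtain XL XB where x: "X = nd 0 d + XL + XB" "msr 0 d (LamC M) XL" "msr 0 d (BoxC N) XB"
    by (rule msr_AppE) blast
  from x(2) obtain XM where xm: "XL = nd 0 d + XM" "msr 0 d M XM" by (rule msr_LamCE) blast
  have xb: "XB = {#d#}" using msr_BoxC0E[OF x(3)] .
  have tN: "typable (mcimg \<Gamma>2) N" using inv_BoxC[OF t2] by blast
  obtain N0 where n0: "msr 0 0 N N0" using msr_exists[OF tN] by blast
  define SP where "SP = (\<lambda>e. image_mset (\<lambda>x. x + e) N0)"
  have sp: "\<forall>e. msr 0 e N (SP e)" unfolding SP_def using SP_msr[OF n0] .
  obtain Q where q: "occ 0 d M Q" "occP (ext PCo \<Gamma>1 0) d Q" using occ_typ[OF tM] by blast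
  have qd: "Q = {#}" using q(2) by (simp add: ext_apply)
  obtain Y where y: "XM = Y + Q" "msr 0 d (substs 0 N M) (Y + sum_mset (image_mset SP Q))"
    using subst_formula[OF xm(2) refl q(1) sp] by blast
  have "X' = Y" using msr_unique[OF beta_coind.prems(3)[unfolded subst0_def] y(2)] qd by simp
  then have "X = X' + {#d, d, d#}" using x(1) xm(1) xb y(1) qd by (simp add: nd_def ac_simps)
  then show ?case using strict_sub[of "{#d, d, d#}" X'] by simp
next
  case (app_l n M M' N)
  obtain \<Gamma>1 \<Gamma>2 where t1: "typable \<Gamma>1 M" using inv_App[OF app_l.prems(1)] by blast
  from app_l.prems(2) obtain A B where x: "X = nd n d + A + B" "msr n d M A" "msr n d N B"
    by (rule msr_AppE) blast
  from app_l.prems(3) obtain A' B' where x': "X' = nd n d + A' + B'" "msr n d M' A'" "msr n d N B'"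
    by (rule msr_AppE) blast
  have "B' = B" using msr_unique[OF x'(3) x(3)] .
  then show ?case using mult_ctx[OF app_l.IH[OF t1 x(2) x'(2)]] x x' by simp
next
  case (app_r n N N' M)
  obtain \<Gamma>1 \<Gamma>2 where t2: "typable \<Gamma>2 N" using inv_App[OF app_r.prems(1)] by blast
  from app_r.prems(2) obtain A B where x: "X = nd n d + A + B" "msr n d M A" "msr n d N B"
    by (rule msr_AppE) blast
  from app_r.prems(3) obtain A' B' where x': "X' = nd n d + A' + B'" "msr n d M A'" "msr n d N' B'"
    by (rule msr_AppE) blast
  have "A' = A" using msr_unique[OF x'(2) x(2)] .
  then show ?case using mult_ctx[OF app_r.IH[OF t2 x(3) x'(3)], of "nd n d + A" "{#}"] x x' by (simp add: ac_simps)
next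
  case (lam n M M')
  have t: "typable (ext PLin \<Gamma>) M" using inv_Lam[OF lam.prems(1)] .
  from lam.prems(2) obtain A where x: "X = nd n d + A" "msr n d M A" by (rule msr_LamE) blast
  from lam.prems(3) obtain A' where x': "X' = nd n d + A'" "msr n d M' A'" by (rule msr_LamE) blast
  show ?case using mult_ctx[OF lam.IH[OF t x(2) x'(2)], of "nd n d" "{#}"] x x' by simp
next
  case (lamI n M M')
  obtain G where t: "typable G M" using inv_LamI[OF lamI.prems(1)] by blast
  from lamI.prems(2) obtain A where x: "X = nd n d + A" "msr n d M A" by (rule msr_LamIE) blast
  from lamI.prems(3) obtain A' where x': "X' = nd n d + A'" "msr n d M' A'" by (rule msr_LamIE) blast
  show ?case using mult_ctx[OF lamI.IH[OF t x(2) x'(2)], of "nd n d" "{#}"] x x' by simp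
next
  case (lamC n M M')
  have t: "typable (ext PCo \<Gamma>) M" using inv_LamC[OF lamC.prems(1)] .
  from lamC.prems(2) obtain A where x: "X = nd n d + A" "msr n d M A" by (rule msr_LamCE) blast
  from lamC.prems(3) obtain A' where x': "X' = nd n d + A'" "msr n d M' A'" by (rule msr_LamCE) blast
  show ?case using mult_ctx[OF lamC.IH[OF t x(2) x'(2)], of "nd n d" "{#}"] x x' by simp
next
  case (boxI n M M')
  have t: "typable (miimg \<Gamma>) M" using inv_BoxI[OF boxI.prems(1)] by blast
  from boxI.prems(2) obtain A where x: "X = nd n d + A" "msr n (Suc d) M A" by (rule msr_BoxIE) blast
  from boxI.prems(3) obtain A' where x': "X' = nd n d + A'" "msr n (Suc d) M' A'" by (rule msr_BoxIE) blast
  show ?case using mult_ctx[OF boxI.IH[OF t x(2) x'(2)], of "nd n d" "{#}"] x x' by simp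
next
  case (boxC n M M')
  have t: "typable (mcimg \<Gamma>) M" using inv_BoxC[OF boxC.prems(1)] by blast
  show ?case using boxC.IH[OF t msr_BoxCSE[OF boxC.prems(2)] msr_BoxCSE[OF boxC.prems(3)]] .
qed

theorem mainTheorem14:
  fixes n :: nat
  shows "\<not> (\<exists>f :: nat \<Rightarrow> trm. is_term (f 0) \<and> (\<forall>i. red n (f i) (f (Suc i))))"
proof
  assume "\<exists>f :: nat \<Rightarrow> trm. is_term (f 0) \<and> (\<forall>i. red n (f i) (f (Suc i)))"
  then obtain f :: "nat \<Rightarrow> trm" where f0: "is_term (f 0)" and fr: "\<forall>i. red n (f i) (f (Suc i))" by blast
  have T: "\<exists>\<Gamma>. typable \<Gamma> (f i)" for i
  proof (induction i)
    case 0 then show ?case using f0 unfolding is_term_def by blast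
  next
    case (Suc i) then show ?case using subj fr by blast
  qed
  define X where "X i = (THE X. msr n 0 (f i) X)" for i
  have mX: "msr n 0 (f i) (X i)" for i
  proof -
    obtain \<Gamma> where "typable \<Gamma> (f i)" using T by blast
    then obtain A where "msr n 0 (f i) A" using msr_exists by blast
    then show ?thesis unfolding X_def using msr_unique by (metis theI)
  qed
  have "(X (Suc i), X i) \<in> mult less_than" for i
  proof -
    obtain \<Gamma> where "typable \<Gamma> (f i)" using T by blast
    then show ?thesis using dec fr mX by blast
  qed
  moreover have "wf (mult less_than)" by (rule wf_mult[OF wf_less_than])
  ultimately show False using wf_iff_no_infinite_down_chain by blast
qed


end
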